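(* Let $\zeta:\mathbb{R}\to\mathbb{R}$ be continuous and assume either (i) $\zeta$ is not a polynomial, or (ii) $\zeta$ is not affine and there exists $t\in\mathbb{R}$ at which $\zeta$ is continuously differentiable with $\zeta'(t)\neq 0$. Let $N, D$ be positive integers and fix $0<\varsigma<1/(9D^{3/2})$. Let $\mathcal{G}$ be the complete graph on $N$ nodes, let $\tilde{\mathbf{A}} = \big(\mathbb{1}_{i\sim j \vee i=j}/\sqrt{\deg(v_i)\deg(v_j)}\big)_{i,j=1}^N$, let $\mathbf{W}$ be a $D\times D$ random matrix with i.i.d. entries $W_{i,j}\sim N(0,\varsigma^2)$, and let $\mathcal{L}^{\mathrm{conv+r}}_{\mathcal{G},\mathbf{W}}(\mathbf{X}) = \tilde{\mathbf{A}}\mathbf{X}\mathbf{W} + \mathbf{X}$. Then, with probability at least $1-e^{-D/2}$, the class of maps $\hat f:\mathbb{R}^{N\times D}\to\mathbb{R}$ of the form $\hat f = \mathrm{MLP}\circ\mathcal{L}^{\mathrm{conv+r}}_{\mathcal{G},\mathbf{W}}$, where $\mathrm{MLP}:\mathbb{R}^{N\times D}\to\mathbb{R}$ ranges over multilayer perceptrons with activation function $\zeta$, is dense in $\mathcal{C}(\mathbb{R}^{N\times D},\mathbb{R})$ for the topology of uniform convergence on compact sets.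
   Context: $i\sim j$ means $v_i$ and $v_j$ are adjacent; degrees count the self-loop, so that for the complete graph every entry of $\tilde{\mathbf{A}}$ equals $1/N$. MLPs take the matrix input (viewed as a vector in $\mathbb{R}^{ND}$) to a real number. *)

theory Defs
  imports "HOL-Probability.Probability" "HOL-Computational_Algebra.Polynomial"
begin

definition gdeg :: "('n::finite \<Rightarrow> 'n \<Rightarrow> bool) \<Rightarrow> 'n \<Rightarrow> real" where
  "gdeg E v = real (card {u. E v u \<or> u = v})"

definition norm_adj :: "('n::finite \<Rightarrow> 'n \<Rightarrow> bool) \<Rightarrow> real^'n^'n" where
  "norm_adj E = (\<chi> i j. (if E i j \<or> i = j then 1 else 0) / sqrt (gdeg E i * gdeg E j))"

definition complete_graph :: "'n \<Rightarrow> 'n \<Rightarrow> bool" where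
  "complete_graph i j \<longleftrightarrow> i \<noteq> j"

definition conv_res :: "real^'n^'n \<Rightarrow> real^'d^'d \<Rightarrow> real^'d^'n \<Rightarrow> real^'d^'n" where
  "conv_res A W X = A ** X ** W + X"

text \<open>Hidden-layer feature maps of an MLP with activation \<zeta> on input space 'a
(at least one hidden layer; each neuron given by (weights, bias)).\<close>
inductive_set mlp_feat :: "(real \<Rightarrow> real) \<Rightarrow> ('a::real_inner \<Rightarrow> real list) set"
  for \<zeta> :: "real \<Rightarrow> real" where
  first: "(\<lambda>x. map (\<lambda>(a, b). \<zeta> (inner a x + b)) ps) \<in> mlp_feat \<zeta>"
| deeper: "g \<in> mlp_feat \<zeta> \<Longrightarrow> (\<forall>(w, b) \<in> set ps. \<forall>x. length w = length (g x)) \<Longrightarrow>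
     (\<lambda>x. map (\<lambda>(w, b). \<zeta> (sum_list (map2 (*) w (g x)) + b)) ps) \<in> mlp_feat \<zeta>"

definition mlp :: "(real \<Rightarrow> real) \<Rightarrow> ('a::real_inner \<Rightarrow> real) set" where
  "mlp \<zeta> = {(\<lambda>x. sum_list (map2 (*) c (g x)) + d) | g c d.
             g \<in> mlp_feat \<zeta> \<and> (\<forall>x. length c = length (g x))}"

definition dense_ucc :: "('a::real_normed_vector \<Rightarrow> real) set \<Rightarrow> bool" where
  "dense_ucc F \<longleftrightarrow> (\<forall>f. continuous_on UNIV f \<longrightarrow> (\<forall>K. compact K \<longrightarrow> (\<forall>\<epsilon>>0.
      \<exists>h\<in>F. \<forall>x\<in>K. \<bar>f x - h x\<bar> < \<epsilon>)))"

text \<open>Law of a D\<times>D matrix with i.i.d. N(0, \<sigma>^2) entries, as a product measure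
over index pairs.\<close>
definition gauss_matrix_measure :: "real \<Rightarrow> (('d::finite \<times> 'd) \<Rightarrow> real) measure" where
  "gauss_matrix_measure \<sigma> = PiM UNIV (\<lambda>_. density lborel (normal_density 0 \<sigma>))"

definition mat_of :: "(('d::finite \<times> 'd) \<Rightarrow> real) \<Rightarrow> real^'d^'d" where
  "mat_of w = (\<chi> i j. w (i, j))"

definition cont_diff_at :: "(real \<Rightarrow> real) \<Rightarrow> real \<Rightarrow> bool" where
  "cont_diff_at f t \<longleftrightarrow> (\<exists>e>0. \<forall>x\<in>ball t e. f differentiable (at x)) \<and> isCont (deriv f) t"

end

theory Submission
  imports Defs
begin

lemma piece_bound:
  fixes f :: "real \<Rightarrow> real"
  assumes ab: "a \<le> b" and cf: "continuous_on {a..b} f" and e: "\<And>x. x \<in> {a..b} \<Longrightarrow> \<bar>f x - f a\<bar> \<le> e"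
  shows "\<bar>integral {a..b} f - (b - a) * f a\<bar> \<le> (b - a) * e"
proof -
  have int: "f integrable_on {a..b}" using cf integrable_continuous_real by blast
  have "integral {a..b} (\<lambda>x. f x - f a) = integral {a..b} f - integral {a..b} (\<lambda>x. f a)"
    by (rule integral_diff[OF int integrable_const_ivl])
  also have "\<dots> = integral {a..b} f - (b - a) * f a" using ab by simp
  finally have "integral {a..b} (\<lambda>x. f x - f a) = integral {a..b} f - (b - a) * f a" .
  moreover have "(( \<lambda>x. f x - f a) has_integral integral {a..b} (\<lambda>x. f x - f a)) {a..b}"
    using int by (intro integrable_integral integrable_diff) auto
  moreover have "0 \<le> e" using e[of a] ab by auto
  ultimately have "norm (integral {a..b} f - (b - a) * f a) \<le> e * Henstock_Kurzweil_Integration.content {a..b}"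
    using has_integral_bound_real[of e "{}" "\<lambda>x. f x - f a" _ a b] e by auto
  thus ?thesis using ab by (simp add: mult.commute)
qed

lemma integral_split_n:
  fixes f :: "real \<Rightarrow> real"
  assumes s: "0 \<le> s" and cf: "continuous_on UNIV f"
  shows "integral {a..a + real m * s} f = (\<Sum>i<m. integral {a + real i * s..a + real (Suc i) * s} f)"
proof (induction m)
  case 0 then show ?case by simp
next
  case (Suc m)
  have "integral {a..a + real m * s} f + integral {a + real m * s..a + real (Suc m) * s} f
        = integral {a..a + real (Suc m) * s} f"
    apply (rule Henstock_Kurzweil_Integration.integral_combine[of a "a + real m * s" "a + real (Suc m) * s" f])
    by (use s in \<open>auto intro!: integrable_continuous_real continuous_on_subset[OF cf] mult_right_mono\<close>)
  then show ?case using Suc by simp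
qed

definition approx :: "('a::real_normed_vector \<Rightarrow> real) set \<Rightarrow> ('a \<Rightarrow> real) \<Rightarrow> bool" where
  "approx F f \<longleftrightarrow> (\<forall>K. compact K \<longrightarrow> (\<forall>\<epsilon>>0. \<exists>h\<in>F. \<forall>x\<in>K. \<bar>f x - h x\<bar> < \<epsilon>))"

definition good_class :: "(real \<Rightarrow> real) set \<Rightarrow> bool" where
  "good_class C \<longleftrightarrow> (\<lambda>y. 0) \<in> C \<and> (\<forall>f\<in>C. \<forall>g\<in>C. (\<lambda>y. f y + g y) \<in> C) \<and>
     (\<forall>f\<in>C. \<forall>c. (\<lambda>y. c * f y) \<in> C) \<and> (\<forall>f\<in>C. \<forall>t. (\<lambda>y. f (y + t)) \<in> C) \<and>
     (\<forall>f. approx C f \<longrightarrow> f \<in> C)"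

lemma good_zero: "good_class C \<Longrightarrow> (\<lambda>y. 0) \<in> C" unfolding good_class_def by blast
lemma good_add: "good_class C \<Longrightarrow> f \<in> C \<Longrightarrow> g \<in> C \<Longrightarrow> (\<lambda>y. f y + g y) \<in> C" unfolding good_class_def by blast
lemma good_scale: "good_class C \<Longrightarrow> f \<in> C \<Longrightarrow> (\<lambda>y. c * f y) \<in> C" unfolding good_class_def by blast
lemma good_shift: "good_class C \<Longrightarrow> f \<in> C \<Longrightarrow> (\<lambda>y. f (y + t)) \<in> C" unfolding good_class_def by blast
lemma good_closed: "good_class C \<Longrightarrow> approx C f \<Longrightarrow> f \<in> C" unfolding good_class_def by blast

lemma good_sum:
  assumes "good_class C" "finite I" "\<And>i. i \<in> I \<Longrightarrow> f i \<in> C"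
  shows "(\<lambda>y. \<Sum>i\<in>I. f i y) \<in> C"
  using assms(2,3)
proof (induction I rule: finite_induct)
  case empty then show ?case using assms(1) unfolding good_class_def by simp
next
  case (insert x F)
  then have "(\<lambda>y. f x y + (\<Sum>i\<in>F. f i y)) \<in> C"
    using good_add[OF assms(1)] by blast
  then show ?case using insert by simp
qed

lemma bounded_real_ex:
  fixes K :: "real set"
  assumes "compact K" obtains R where "R \<ge> 0" "\<And>x. x \<in> K \<Longrightarrow> \<bar>x\<bar> \<le> R"
proof -
  obtain a where "\<forall>x\<in>K. \<bar>x\<bar> \<le> a" using compact_imp_bounded[OF assms] bounded_real by auto
  then show ?thesis by (intro that[of "max a 0"]) force+
qed

lemma good_avg:
  assumes C: "good_class C" and phiC: "\<phi> \<in> C" and cphi: "continuous_on UNIV \<phi>" and h: "0 < h"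
  shows "(\<lambda>y. integral {y..y+h} \<phi> / h) \<in> C"
proof -
  have "approx C (\<lambda>y. integral {y..y+h} \<phi> / h)"
    unfolding approx_def
  proof (intro allI impI)
    fix K :: "real set" and \<epsilon> :: real
    assume K: "compact K" and e: "0 < \<epsilon>"
    obtain R where R0: "R \<ge> 0" and R: "\<And>x. x \<in> K \<Longrightarrow> \<bar>x\<bar> \<le> R" using bounded_real_ex[OF K] by blast
    have "uniformly_continuous_on {-R..R+h} \<phi>"
      by (rule compact_uniformly_continuous) (auto intro: continuous_on_subset[OF cphi])
    then obtain d where d: "d > 0" and dd: "\<And>x x'. x \<in> {-R..R+h} \<Longrightarrow> x' \<in> {-R..R+h} \<Longrightarrow> dist x' x < d \<Longrightarrow> dist (\<phi> x') (\<phi> x) < \<epsilon>/2"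
      unfolding uniformly_continuous_on_def using half_gt_zero[OF e] by blast
    obtain n :: nat where n: "h / d < real n" using reals_Archimedean2 by blast
    have npos: "n > 0" using n h d by (cases n) (auto simp: field_simps)
    define s where "s = h / real n"
    have s0: "s > 0" using npos h by (simp add: s_def)
    have sd: "s < d" using n d npos h by (simp add: s_def field_simps)
    have hs: "h = real n * s" using npos by (simp add: s_def)
    define S where "S = (\<lambda>y. \<Sum>i\<in>{..<n}. (1 / real n) * \<phi> (y + real i * s))"
    have SC: "S \<in> C"
      unfolding S_def
    proof (rule good_sum[OF C])
      fix i
      have "(\<lambda>y. \<phi> (y + real i * s)) \<in> C" by (rule good_shift[OF C phiC])
      from good_scale[OF C this] show "(\<lambda>y. 1 / real n * \<phi> (y + real i * s)) \<in> C" .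
    qed simp
    have "\<forall>y\<in>K. \<bar>integral {y..y+h} \<phi> / h - S y\<bar> < \<epsilon>"
    proof
      fix y assume yK: "y \<in> K"
      have yR: "-R \<le> y" "y \<le> R" using R[OF yK] by auto
      have I: "integral {y..y+h} \<phi> = (\<Sum>i<n. integral {y + real i * s..y + real (Suc i) * s} \<phi>)"
        using integral_split_n[OF less_imp_le[OF s0] cphi, of y n] hs by simp
      have piece: "\<bar>integral {y + real i * s..y + real (Suc i) * s} \<phi> - s * \<phi> (y + real i * s)\<bar> \<le> s * (\<epsilon>/2)"
        if i: "i < n" for i
      proof -
        have le: "y + real i * s \<le> y + real (Suc i) * s" using s0 by simp
        have "real (Suc i) * s \<le> h" using i hs s0 by (simp add: mult_right_mono del: of_nat_Suc) 
        then have top: "y + real (Suc i) * s \<le> R + h" using yR by linarith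
        have "0 \<le> real i * s" using s0 by simp
        then have bot: "-R \<le> y + real i * s" using yR by linarith
        have "\<bar>integral {y + real i * s..y + real (Suc i) * s} \<phi> - (y + real (Suc i) * s - (y + real i * s)) * \<phi> (y + real i * s)\<bar>
              \<le> (y + real (Suc i) * s - (y + real i * s)) * (\<epsilon>/2)"
        proof (rule piece_bound[OF le continuous_on_subset[OF cphi]])
          fix x assume x: "x \<in> {y + real i * s..y + real (Suc i) * s}"
          have "x - (y + real i * s) \<le> s" using x by (simp add: algebra_simps)
          then have "dist x (y + real i * s) < d" using x sd by (simp add: dist_real_def)
          moreover have "x \<in> {-R..R+h}" "y + real i * s \<in> {-R..R+h}" using x top bot le by auto
          ultimately show "\<bar>\<phi> x - \<phi> (y + real i * s)\<bar> \<le> \<epsilon>/2"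
            using dd[of "y + real i * s" x] by (simp add: dist_real_def)
        qed auto
        moreover have "y + real (Suc i) * s - (y + real i * s) = s" by (simp add: algebra_simps)
        ultimately show ?thesis by simp
      qed
      have "\<bar>integral {y..y+h} \<phi> - (\<Sum>i<n. s * \<phi> (y + real i * s))\<bar>
            = \<bar>\<Sum>i<n. (integral {y + real i * s..y + real (Suc i) * s} \<phi> - s * \<phi> (y + real i * s))\<bar>"
        by (simp add: I sum_subtractf)
      also have "\<dots> \<le> (\<Sum>i<n. \<bar>integral {y + real i * s..y + real (Suc i) * s} \<phi> - s * \<phi> (y + real i * s)\<bar>)"
        by (rule sum_abs)
      also have "\<dots> \<le> (\<Sum>i<n. s * (\<epsilon>/2))" by (rule sum_mono) (use piece in auto)
      also have "\<dots> = h * (\<epsilon>/2)" using hs by simp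
      finally have A: "\<bar>integral {y..y+h} \<phi> - (\<Sum>i<n. s * \<phi> (y + real i * s))\<bar> \<le> h * (\<epsilon>/2)" .
      have SY: "S y = (\<Sum>i<n. s * \<phi> (y + real i * s)) / h"
        unfolding S_def using hs npos s0 by (simp add: sum_divide_distrib)
      have "\<bar>integral {y..y+h} \<phi> / h - S y\<bar> = \<bar>integral {y..y+h} \<phi> - (\<Sum>i<n. s * \<phi> (y + real i * s))\<bar> / h"
        using h by (simp add: SY diff_divide_distrib[symmetric])
      also have "\<dots> \<le> \<epsilon>/2" using A h by (simp add: divide_le_eq mult.commute)
      finally show "\<bar>integral {y..y+h} \<phi> / h - S y\<bar> < \<epsilon>" using e by linarith
    qed
    then show "\<exists>g\<in>C. \<forall>x\<in>K. \<bar>integral {x..x + h} \<phi> / h - g x\<bar> < \<epsilon>" using SC by blast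
  qed
  then show ?thesis by (rule good_closed[OF C])
qed

lemma avg_deriv:
  fixes \<phi> :: "real \<Rightarrow> real"
  assumes cphi: "continuous_on UNIV \<phi>" and h: "0 < h"
  shows "((\<lambda>y. integral {y..y+h} \<phi> / h) has_real_derivative (\<phi> (y+h) - \<phi> y) / h) (at y)"
proof -
  define a where "a = y - 1"
  define b where "b = y + h + 1"
  define F where "F = (\<lambda>z. integral {a..z} \<phi>)"
  have F': "(F has_real_derivative \<phi> t) (at t)" if t: "t \<in> {a<..<b}" for t
  proof -
    have "(F has_real_derivative \<phi> t) (at t within {a..b})"
      unfolding F_def by (rule integral_has_real_derivative) (use t in \<open>auto intro: continuous_on_subset[OF cphi]\<close>)
    moreover have "at t within {a..b} = at t" by (rule at_within_interior) (use t in auto)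
    ultimately show ?thesis by simp
  qed
  have "((\<lambda>z. F (z + h)) has_real_derivative \<phi> (y + h)) (at y)"
    using F'[of "y+h"] DERIV_shift[of F "\<phi> (y+h)" y h] unfolding a_def b_def using h by auto
  moreover have "(F has_real_derivative \<phi> y) (at y)" using F'[of y] unfolding a_def b_def using h by auto
  ultimately have g: "((\<lambda>z. (F (z + h) - F z) / h) has_real_derivative (\<phi> (y+h) - \<phi> y) / h) (at y)"
    by (intro DERIV_cdivide DERIV_diff)
  show ?thesis
  proof (rule has_field_derivative_transform_within_open[OF g, of "{y-1<..<y+1}"])
    fix z assume z: "z \<in> {y-1<..<y+1}"
    have "integral {a..z} \<phi> + integral {z..z+h} \<phi> = integral {a..z+h} \<phi>"
      by (rule Henstock_Kurzweil_Integration.integral_combine) (use z h in \<open>auto simp: a_def b_def intro!: integrable_continuous_real continuous_on_subset[OF cphi]\<close>)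
    then show "(F (z + h) - F z) / h = integral {z..z+h} \<phi> / h" unfolding F_def by (simp add: algebra_simps)
  qed auto
qed

fun lay :: "(real \<Rightarrow> real) \<Rightarrow> nat \<Rightarrow> ('a::real_inner \<Rightarrow> real) set" where
  "lay \<zeta> 0 = {(\<lambda>x. inner a x + b) | a b. True}"
| "lay \<zeta> (Suc L) = {(\<lambda>x. (\<Sum>k\<in>K. c k * \<zeta> (k x)) + d) | K c d. finite K \<and> K \<subseteq> lay \<zeta> L}"

lemma lay_SucI:
  assumes "finite K" "K \<subseteq> lay \<zeta> L" "f = (\<lambda>x. (\<Sum>k\<in>K. c k * \<zeta> (k x)) + d)"
  shows "f \<in> lay \<zeta> (Suc L)"
  using assms by (simp only: lay.simps mem_Collect_eq) blast

lemma lay0I: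
  assumes "f = (\<lambda>x. inner a x + b)"
  shows "f \<in> lay \<zeta> 0"
  using assms by (simp only: lay.simps mem_Collect_eq) blast

lemma lay_Suc_const: "(\<lambda>x. d) \<in> lay \<zeta> (Suc L)"
  by (simp, rule exI[of _ "{}"], auto)

lemma lay_Suc_add:
  assumes "f \<in> lay \<zeta> (Suc L)" "g \<in> lay \<zeta> (Suc L)"
  shows "(\<lambda>x. f x + g x) \<in> lay \<zeta> (Suc L)"
proof -
  obtain K1 c1 d1 where 1: "f = (\<lambda>x. (\<Sum>k\<in>K1. c1 k * \<zeta> (k x)) + d1)" "finite K1" "K1 \<subseteq> lay \<zeta> L"
    using assms(1) by auto
  obtain K2 c2 d2 where 2: "g = (\<lambda>x. (\<Sum>k\<in>K2. c2 k * \<zeta> (k x)) + d2)" "finite K2" "K2 \<subseteq> lay \<zeta> L"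
    using assms(2) by auto
  define c where "c = (\<lambda>k. (if k \<in> K1 then c1 k else 0) + (if k \<in> K2 then c2 k else 0))"
  have "(\<lambda>x. f x + g x) = (\<lambda>x. (\<Sum>k\<in>K1 \<union> K2. c k * \<zeta> (k x)) + (d1 + d2))"
  proof
    fix x
    have "(\<Sum>k\<in>K1 \<union> K2. c k * \<zeta> (k x)) = (\<Sum>k\<in>K1 \<union> K2. (if k \<in> K1 then c1 k * \<zeta> (k x) else 0))
          + (\<Sum>k\<in>K1 \<union> K2. (if k \<in> K2 then c2 k * \<zeta> (k x) else 0))"
    proof -
      have "\<And>k. c k * \<zeta> (k x) = (if k \<in> K1 then c1 k * \<zeta> (k x) else 0) + (if k \<in> K2 then c2 k * \<zeta> (k x) else 0)"
        unfolding c_def by (simp add: distrib_right)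
      then show ?thesis by (simp add: sum.distrib)
    qed
    also have "\<dots> = (\<Sum>k\<in>K1. c1 k * \<zeta> (k x)) + (\<Sum>k\<in>K2. c2 k * \<zeta> (k x))"
      using 1(2) 2(2) by (simp add: sum.inter_restrict[of "K1 \<union> K2", symmetric] Int_absorb1)
    finally show "f x + g x = (\<Sum>k\<in>K1 \<union> K2. c k * \<zeta> (k x)) + (d1 + d2)" using 1(1) 2(1) by simp
  qed
  then show ?thesis using 1 2 by (intro lay_SucI[of "K1 \<union> K2" _ _ _ c "d1 + d2"]) auto
qed

lemma lay_Suc_scale:
  assumes "f \<in> lay \<zeta> (Suc L)"
  shows "(\<lambda>x. a * f x + b) \<in> lay \<zeta> (Suc L)"
proof -
  obtain K1 c1 d1 where 1: "f = (\<lambda>x. (\<Sum>k\<in>K1. c1 k * \<zeta> (k x)) + d1)" "finite K1" "K1 \<subseteq> lay \<zeta> L"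
    using assms(1) by auto
  have "(\<lambda>x. a * f x + b) = (\<lambda>x. (\<Sum>k\<in>K1. (a * c1 k) * \<zeta> (k x)) + (a * d1 + b))"
    using 1(1) by (auto simp: sum_distrib_left algebra_simps)
  then show ?thesis using 1 by (intro lay_SucI[of K1 _ _ _ "\<lambda>k. a * c1 k" "a * d1 + b"]) auto
qed

lemma lay_Suc_neuron:
  assumes "k \<in> lay \<zeta> L"
  shows "(\<lambda>x. c * \<zeta> (k x)) \<in> lay \<zeta> (Suc L)"
proof -
  have "(\<lambda>x. c * \<zeta> (k x)) = (\<lambda>x. (\<Sum>k'\<in>{k}. (\<lambda>_. c) k' * \<zeta> (k' x)) + 0)" by simp
  then show ?thesis using assms by (intro lay_SucI[of "{k}" _ _ _ "\<lambda>_. c" 0]) auto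
qed

lemma lay_Suc_sum:
  assumes "finite I" "\<And>i. i \<in> I \<Longrightarrow> k i \<in> lay \<zeta> L"
  shows "(\<lambda>x. (\<Sum>i\<in>I. c i * \<zeta> (k i x)) + d) \<in> lay \<zeta> (Suc L)"
  using assms
proof (induction I arbitrary: d rule: finite_induct)
  case empty then show ?case using lay_Suc_const by simp
next
  case (insert i F)
  have "(\<lambda>x. c i * \<zeta> (k i x) + ((\<Sum>j\<in>F. c j * \<zeta> (k j x)) + d)) \<in> lay \<zeta> (Suc L)"
    by (rule lay_Suc_add[OF lay_Suc_neuron]) (use insert in auto)
  then show ?case using insert by (simp add: add.assoc)
qed

lemma lay0_affine:
  assumes "k \<in> lay \<zeta> 0"
  shows "(\<lambda>x. a * k x + b) \<in> lay \<zeta> 0"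
proof -
  obtain v c where "k = (\<lambda>x. inner v x + c)" using assms by auto
  then have "(\<lambda>x. a * k x + b) = (\<lambda>x. inner (a *\<^sub>R v) x + (a * c + b))" by (auto simp: algebra_simps)
  then show ?thesis by (rule lay0I)
qed

lemma lay_affine:
  assumes "k \<in> lay \<zeta> L"
  shows "(\<lambda>x. a * k x + b) \<in> lay \<zeta> L"
  using assms by (cases L) (auto intro: lay0_affine lay_Suc_scale simp del: lay.simps)

lemma lay_cont:
  assumes "continuous_on UNIV \<zeta>"
  shows "f \<in> lay \<zeta> L \<Longrightarrow> continuous_on UNIV f"
proof (induction L arbitrary: f)
  case 0 then show ?case by (auto intro!: continuous_intros)
next
  case (Suc L)
  then obtain K c d where "f = (\<lambda>x. (\<Sum>k\<in>K. c k * \<zeta> (k x)) + d)" "finite K" "K \<subseteq> lay \<zeta> L" by auto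
  moreover have "continuous_on UNIV (\<lambda>x. \<zeta> (k x))" if "k \<in> K" for k
    using continuous_on_compose2[OF assms Suc.IH[of k]] that \<open>K \<subseteq> lay \<zeta> L\<close> by auto
  ultimately show ?case by (auto intro!: continuous_intros)
qed

lemma lay_SucE:
  assumes "f \<in> lay \<zeta> (Suc L)"
  obtains K c d where "f = (\<lambda>x. (\<Sum>k\<in>K. c k * \<zeta> (k x)) + d)" "finite K" "K \<subseteq> lay \<zeta> L"
  using assms by auto

lemma lay0E:
  assumes "f \<in> lay \<zeta> 0"
  obtains a b where "f = (\<lambda>x. inner a x + b)"
  using assms by auto

declare lay.simps[simp del]

lemma approx_mem: assumes "f \<in> F" shows "approx F f"
  unfolding approx_def
proof (intro allI impI)
  fix K :: "'a set" and \<epsilon> :: real assume "compact K" "0 < \<epsilon>"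
  then show "\<exists>h\<in>F. \<forall>x\<in>K. \<bar>f x - h x\<bar> < \<epsilon>" using assms by (intro bexI[of _ f]) auto
qed
lemma approxD:
  assumes "approx F f" "compact K" "0 < \<epsilon>"
  obtains h where "h \<in> F" "\<And>x. x \<in> K \<Longrightarrow> \<bar>f x - h x\<bar> < \<epsilon>"
proof -
  have "\<exists>h\<in>F. \<forall>x\<in>K. \<bar>f x - h x\<bar> < \<epsilon>" using assms(1)[unfolded approx_def, rule_format, OF assms(2) assms(3)] .
  then show thesis using that by blast
qed

lemma approx_trans:
  assumes "approx {g. approx F g} f" shows "approx F f"
  unfolding approx_def
proof (intro allI impI)
  fix K :: "'a set" and \<epsilon> :: real assume K: "compact K" and e: "0 < \<epsilon>"
  obtain g where g: "g \<in> {g. approx F g}" "\<And>x. x\<in>K \<Longrightarrow> \<bar>f x - g x\<bar> < \<epsilon>/2"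
    using approxD[OF assms K half_gt_zero[OF e]] by blast
  obtain h where h: "h \<in> F" "\<And>x. x\<in>K \<Longrightarrow> \<bar>g x - h x\<bar> < \<epsilon>/2"
    using approxD[OF _ K half_gt_zero[OF e], of F g] g(1) by blast
  have "\<forall>x\<in>K. \<bar>f x - h x\<bar> < \<epsilon>"
  proof
    fix x assume "x \<in> K"
    then have "\<bar>f x - g x\<bar> < \<epsilon>/2" "\<bar>g x - h x\<bar> < \<epsilon>/2" using g h by auto
    then show "\<bar>f x - h x\<bar> < \<epsilon>" by linarith
  qed
  then show "\<exists>h\<in>F. \<forall>x\<in>K. \<bar>f x - h x\<bar> < \<epsilon>" using h(1) by blast
qed

lemma approx_add:
  assumes F: "\<And>f g. f \<in> F \<Longrightarrow> g \<in> F \<Longrightarrow> (\<lambda>x. f x + g x) \<in> F"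
    and f: "approx F f" and g: "approx F g"
  shows "approx F (\<lambda>x. f x + g x)"
  unfolding approx_def
proof (intro allI impI)
  fix K :: "'a set" and \<epsilon> :: real assume K: "compact K" and e: "0 < \<epsilon>"
  obtain f' where f': "f' \<in> F" "\<And>x. x\<in>K \<Longrightarrow> \<bar>f x - f' x\<bar> < \<epsilon>/2"
    using approxD[OF f K half_gt_zero[OF e]] by blast
  obtain g' where g': "g' \<in> F" "\<And>x. x\<in>K \<Longrightarrow> \<bar>g x - g' x\<bar> < \<epsilon>/2"
    using approxD[OF g K half_gt_zero[OF e]] by blast
  have "\<forall>x\<in>K. \<bar>(f x + g x) - (f' x + g' x)\<bar> < \<epsilon>"
  proof
    fix x assume "x \<in> K"
    then have "\<bar>f x - f' x\<bar> < \<epsilon>/2" "\<bar>g x - g' x\<bar> < \<epsilon>/2" using f' g' by auto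
    then show "\<bar>(f x + g x) - (f' x + g' x)\<bar> < \<epsilon>" by linarith
  qed
  then show "\<exists>h\<in>F. \<forall>x\<in>K. \<bar>(f x + g x) - h x\<bar> < \<epsilon>" by (intro bexI[OF _ F[OF f'(1) g'(1)]]) simp
qed

lemma approx_scale:
  assumes F: "\<And>f. f \<in> F \<Longrightarrow> (\<lambda>x. c * f x) \<in> F"
    and f: "approx F f"
  shows "approx F (\<lambda>x. c * f x)"
  unfolding approx_def
proof (intro allI impI)
  fix K :: "'a set" and \<epsilon> :: real assume K: "compact K" and e: "0 < \<epsilon>"
  have e': "\<epsilon> / (\<bar>c\<bar> + 1) > 0" using e by simp
  obtain f' where f': "f' \<in> F" "\<And>x. x\<in>K \<Longrightarrow> \<bar>f x - f' x\<bar> < \<epsilon> / (\<bar>c\<bar> + 1)"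
    using approxD[OF f K e'] by blast
  have "\<forall>x\<in>K. \<bar>c * f x - c * f' x\<bar> < \<epsilon>"
  proof
    fix x assume "x \<in> K"
    then have A: "\<bar>f x - f' x\<bar> < \<epsilon> / (\<bar>c\<bar> + 1)" using f' by auto
    have "\<bar>c * f x - c * f' x\<bar> = \<bar>c\<bar> * \<bar>f x - f' x\<bar>" by (simp add: abs_mult[symmetric] algebra_simps)
    also have "\<dots> \<le> (\<bar>c\<bar> + 1) * \<bar>f x - f' x\<bar>" by (simp add: mult_right_mono)
    also have "\<dots> < (\<bar>c\<bar> + 1) * (\<epsilon> / (\<bar>c\<bar> + 1))" using A by (intro mult_strict_left_mono) auto
    also have "\<dots> = \<epsilon>" by simp
    finally show "\<bar>c * f x - c * f' x\<bar> < \<epsilon>" .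
  qed
  then show "\<exists>h\<in>F. \<forall>x\<in>K. \<bar>c * f x - h x\<bar> < \<epsilon>" by (intro bexI[OF _ F[OF f'(1)]]) simp
qed

definition M1 :: "(real \<Rightarrow> real) \<Rightarrow> (real \<Rightarrow> real) set" where
  "M1 \<zeta> = {\<psi>. approx (lay \<zeta> (Suc 0) :: (real \<Rightarrow> real) set) \<psi>}"

lemma M1_closed: "approx (M1 \<zeta>) f \<Longrightarrow> f \<in> M1 \<zeta>"
  unfolding M1_def using approx_trans by auto

lemma M1_add: "f \<in> M1 \<zeta> \<Longrightarrow> g \<in> M1 \<zeta> \<Longrightarrow> (\<lambda>x. f x + g x) \<in> M1 \<zeta>"
  unfolding M1_def by (auto intro: approx_add lay_Suc_add)

lemma M1_scale: "f \<in> M1 \<zeta> \<Longrightarrow> (\<lambda>x. c * f x) \<in> M1 \<zeta>"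
proof -
  have "\<And>g. g \<in> lay \<zeta> (Suc 0) \<Longrightarrow> (\<lambda>x. c * g x) \<in> (lay \<zeta> (Suc 0) :: (real \<Rightarrow> real) set)"
    using lay_Suc_scale[of _ \<zeta> 0 c 0] by simp
  then show "f \<in> M1 \<zeta> \<Longrightarrow> (\<lambda>x. c * f x) \<in> M1 \<zeta>"
    unfolding M1_def using approx_scale[of "lay \<zeta> (Suc 0)" c f] by auto
qed

lemma M1_lay: "f \<in> lay \<zeta> (Suc 0) \<Longrightarrow> f \<in> M1 \<zeta>"
  unfolding M1_def by (auto intro: approx_mem)

lemma M1_zero: "(\<lambda>x. 0) \<in> M1 \<zeta>"
  by (rule M1_lay) (rule lay_Suc_const)

lemma lay1_affine_comp:
  assumes "h \<in> (lay \<zeta> (Suc 0) :: (real \<Rightarrow> real) set)"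
  shows "(\<lambda>y. h (l * y + b)) \<in> (lay \<zeta> (Suc 0) :: (real \<Rightarrow> real) set)"
proof -
  obtain K c d where h: "h = (\<lambda>x. (\<Sum>k\<in>K. c k * \<zeta> (k x)) + d)" "finite K" "K \<subseteq> (lay \<zeta> 0 :: (real \<Rightarrow> real) set)"
    using assms by (rule lay_SucE)
  have "(\<lambda>y. (\<Sum>k\<in>K. c k * \<zeta> ((\<lambda>k y. k (l * y + b)) k y)) + d) \<in> (lay \<zeta> (Suc 0) :: (real \<Rightarrow> real) set)"
  proof (rule lay_Suc_sum[OF h(2)])
    fix k assume "k \<in> K"
    then obtain a b' where k: "k = (\<lambda>x. inner a x + b')" using h(3) lay0E by blast
    show "(\<lambda>y. k (l * y + b)) \<in> (lay \<zeta> 0 :: (real \<Rightarrow> real) set)"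
      by (rule lay0I[of _ "a * l" "a * b + b'"]) (auto simp: k inner_real_def algebra_simps)
  qed
  then show ?thesis using h(1) by simp
qed

lemma M1_affine:
  assumes "\<psi> \<in> M1 \<zeta>" shows "(\<lambda>y. \<psi> (l * y + b)) \<in> M1 \<zeta>"
  unfolding M1_def mem_Collect_eq approx_def
proof (intro allI impI)
  fix K :: "real set" and \<epsilon> :: real assume K: "compact K" and e: "0 < \<epsilon>"
  have K': "compact ((\<lambda>y. l * y + b) ` K)"
    by (rule compact_continuous_image[OF _ K]) (auto intro!: continuous_intros)
  obtain h where h: "h \<in> lay \<zeta> (Suc 0)" "\<forall>x\<in>(\<lambda>y. l * y + b) ` K. \<bar>\<psi> x - h x\<bar> < \<epsilon>"
    using assms K' e unfolding M1_def approx_def by blast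
  show "\<exists>h\<in>lay \<zeta> (Suc 0). \<forall>x\<in>K. \<bar>\<psi> (l * x + b) - h x\<bar> < \<epsilon>"
    using h(2) by (intro bexI[OF _ lay1_affine_comp[OF h(1), of l b]]) simp
qed

lemma M1_neuron: "(\<lambda>y. \<zeta> (l * y + b)) \<in> M1 \<zeta>"
proof -
  have "(\<lambda>y. 1 * \<zeta> ((\<lambda>y. inner l y + b) y)) \<in> (lay \<zeta> (Suc 0) :: (real \<Rightarrow> real) set)"
    by (rule lay_Suc_neuron) (rule lay0I, rule refl)
  then show ?thesis by (intro M1_lay) (simp add: inner_real_def)
qed

definition Mk :: "(real \<Rightarrow> real) \<Rightarrow> nat \<Rightarrow> (real \<Rightarrow> real) set" where
  "Mk \<zeta> k = {\<phi>. \<forall>l b. (\<lambda>y. y ^ k * \<phi> (l * y + b)) \<in> M1 \<zeta>}"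

lemma Mk_good: "good_class (Mk \<zeta> k)"
  unfolding good_class_def
proof (intro conjI ballI allI impI)
  show "(\<lambda>y. 0) \<in> Mk \<zeta> k" unfolding Mk_def using M1_zero by simp
next
  fix f g assume f: "f \<in> Mk \<zeta> k" and g: "g \<in> Mk \<zeta> k"
  show "(\<lambda>y. f y + g y) \<in> Mk \<zeta> k" unfolding Mk_def
  proof (intro CollectI allI)
    fix l b
    have "(\<lambda>y. y ^ k * f (l * y + b) + y ^ k * g (l * y + b)) \<in> M1 \<zeta>"
      using f g unfolding Mk_def by (intro M1_add) auto
    then show "(\<lambda>y. y ^ k * (f (l * y + b) + g (l * y + b))) \<in> M1 \<zeta>" by (simp add: distrib_left)
  qed
next
  fix f c assume f: "f \<in> Mk \<zeta> k"
  show "(\<lambda>y. c * f y) \<in> Mk \<zeta> k" unfolding Mk_def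
  proof (intro CollectI allI)
    fix l b
    have "(\<lambda>y. c * (y ^ k * f (l * y + b))) \<in> M1 \<zeta>"
      using f unfolding Mk_def by (intro M1_scale) auto
    then show "(\<lambda>y. y ^ k * (c * f (l * y + b))) \<in> M1 \<zeta>" by (simp add: ac_simps)
  qed
next
  fix f t assume f: "f \<in> Mk \<zeta> k"
  show "(\<lambda>y. f (y + t)) \<in> Mk \<zeta> k" unfolding Mk_def
  proof (intro CollectI allI)
    fix l b
    have "(\<lambda>y. y ^ k * f (l * y + (b + t))) \<in> M1 \<zeta>" using f unfolding Mk_def by auto
    then show "(\<lambda>y. y ^ k * f (l * y + b + t)) \<in> M1 \<zeta>" by (simp add: add.assoc)
  qed
next
  fix f assume f: "approx (Mk \<zeta> k) f"
  show "f \<in> Mk \<zeta> k" unfolding Mk_def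
  proof (intro CollectI allI)
    fix l b
    show "(\<lambda>y. y ^ k * f (l * y + b)) \<in> M1 \<zeta>"
    proof (rule M1_closed, unfold approx_def, intro allI impI)
      fix K :: "real set" and \<epsilon> :: real assume K: "compact K" and e: "0 < \<epsilon>"
      obtain R where R0: "R \<ge> 0" and R: "\<And>x. x \<in> K \<Longrightarrow> \<bar>x\<bar> \<le> R" using bounded_real_ex[OF K] by blast
      have K': "compact ((\<lambda>y. l * y + b) ` K)"
        by (rule compact_continuous_image[OF _ K]) (auto intro!: continuous_intros)
      have Rk: "R ^ k + 1 > 0" using zero_le_power[OF R0, of k] by linarith
      have e': "\<epsilon> / (R ^ k + 1) > 0" using e Rk by simp
      obtain g where g: "g \<in> Mk \<zeta> k" "\<forall>x\<in>(\<lambda>y. l * y + b) ` K. \<bar>f x - g x\<bar> < \<epsilon> / (R ^ k + 1)"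
        using f K' e' unfolding approx_def by blast
      have "\<forall>y\<in>K. \<bar>y ^ k * f (l * y + b) - y ^ k * g (l * y + b)\<bar> < \<epsilon>"
      proof
        fix y assume y: "y \<in> K"
        have A: "\<bar>f (l * y + b) - g (l * y + b)\<bar> < \<epsilon> / (R ^ k + 1)" using g(2) y by auto
        have "\<bar>y ^ k * f (l * y + b) - y ^ k * g (l * y + b)\<bar> = \<bar>y\<bar> ^ k * \<bar>f (l * y + b) - g (l * y + b)\<bar>"
          by (simp add: abs_mult power_abs right_diff_distrib[symmetric])
        also have "\<dots> \<le> (R ^ k + 1) * \<bar>f (l * y + b) - g (l * y + b)\<bar>"
        proof (intro mult_right_mono)
          have "\<bar>y\<bar> ^ k \<le> R ^ k" using R[OF y] by (intro power_mono) auto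
          then show "\<bar>y\<bar> ^ k \<le> R ^ k + 1" by linarith
        qed simp
        also have "\<dots> < (R ^ k + 1) * (\<epsilon> / (R ^ k + 1))" using A Rk by (intro mult_strict_left_mono) auto
        also have "\<dots> = \<epsilon>" using Rk by simp
        finally show "\<bar>y ^ k * f (l * y + b) - y ^ k * g (l * y + b)\<bar> < \<epsilon>" .
      qed
      moreover have "(\<lambda>y. y ^ k * g (l * y + b)) \<in> M1 \<zeta>" using g(1) unfolding Mk_def by auto
      ultimately show "\<exists>h\<in>M1 \<zeta>. \<forall>y\<in>K. \<bar>y ^ k * f (l * y + b) - h y\<bar> < \<epsilon>"
        by (intro bexI[of _ "\<lambda>y. y ^ k * g (l * y + b)"]) auto
    qed
  qed
qed

lemma mvt_abs:
  fixes f :: "real \<Rightarrow> real"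
  assumes d: "\<And>x. (f has_real_derivative f' x) (at x)"
  shows "\<exists>\<xi>. \<bar>\<xi> - u\<bar> \<le> \<bar>t\<bar> \<and> f (u + t) - f u = t * f' \<xi>"
proof (cases "t > 0")
  case True
  obtain z where "z > u" "z < u + t" "f (u + t) - f u = (u + t - u) * f' z"
    using MVT2[of u "u + t" f f'] True d by auto
  then show ?thesis using True by (intro exI[of _ z]) auto
next
  case False
  show ?thesis
  proof (cases "t = 0")
    case True then show ?thesis by (intro exI[of _ u]) auto
  next
    case False2: False
    then have t: "t < 0" using False by auto
    obtain z where "z > u + t" "z < u" "f u - f (u + t) = (u - (u + t)) * f' z"
      using MVT2[of "u + t" u f f'] t d by auto
    then show ?thesis using t by (intro exI[of _ z]) (auto simp: algebra_simps)
  qed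
qed

lemma Mk_diff:
  assumes phi: "\<phi> \<in> Mk \<zeta> k" and cphi: "continuous_on UNIV \<phi>" and h: "0 < h"
  shows "(\<lambda>y. (\<phi> (y + h) - \<phi> y) / h) \<in> Mk \<zeta> (Suc k)"
proof -
  define \<sigma> where "\<sigma> = (\<lambda>y. integral {y..y+h} \<phi> / h)"
  define \<Delta> where "\<Delta> = (\<lambda>y. (\<phi> (y + h) - \<phi> y) / h)"
  have sig: "\<sigma> \<in> Mk \<zeta> k" unfolding \<sigma>_def by (rule good_avg[OF Mk_good phi cphi h])
  have dsig: "\<And>x. (\<sigma> has_real_derivative \<Delta> x) (at x)"
    unfolding \<sigma>_def \<Delta>_def by (rule avg_deriv[OF cphi h])
  have cD: "continuous_on UNIV \<Delta>"
    unfolding \<Delta>_def using h by (intro continuous_intros continuous_on_compose2[OF cphi]) auto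
  show ?thesis unfolding Mk_def \<Delta>_def[symmetric]
  proof (intro CollectI allI)
    fix l b
    show "(\<lambda>y. y ^ Suc k * \<Delta> (l * y + b)) \<in> M1 \<zeta>"
    proof (rule M1_closed, unfold approx_def, intro allI impI)
      fix K :: "real set" and \<epsilon> :: real assume K: "compact K" and e: "0 < \<epsilon>"
      obtain R where R0: "R \<ge> 0" and R: "\<And>x. x \<in> K \<Longrightarrow> \<bar>x\<bar> \<le> R" using bounded_real_ex[OF K] by blast
      define R1 where "R1 = R + 1"
      have R1: "R1 > 0" using R0 by (simp add: R1_def)
      define B where "B = \<bar>l\<bar> * R1 + \<bar>b\<bar> + 1"
      have RK: "R1 ^ Suc k > 0" using R1 by simp
      have "uniformly_continuous_on {-B..B} \<Delta>"
        by (rule compact_uniformly_continuous) (auto intro: continuous_on_subset[OF cD])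
      then obtain d0 where d0: "d0 > 0" and dd: "\<And>x x'. x \<in> {-B..B} \<Longrightarrow> x' \<in> {-B..B} \<Longrightarrow> dist x' x < d0 \<Longrightarrow> dist (\<Delta> x') (\<Delta> x) < \<epsilon> / R1 ^ Suc k"
        unfolding uniformly_continuous_on_def using divide_pos_pos[OF e RK] by blast
      define \<delta> where "\<delta> = min d0 1 / (2 * R1)"
      have \<delta>: "\<delta> > 0" using d0 R1 by (simp add: \<delta>_def)
      define g where "g = (\<lambda>y. (1/\<delta>) * (y ^ k * \<sigma> ((l + \<delta>) * y + b)) + (-1/\<delta>) * (y ^ k * \<sigma> (l * y + b)))"
      have gM: "g \<in> M1 \<zeta>" unfolding g_def
        using sig unfolding Mk_def by (intro M1_add M1_scale) auto
      have "\<forall>y\<in>K. \<bar>y ^ Suc k * \<Delta> (l * y + b) - g y\<bar> < \<epsilon>"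
      proof
        fix y assume y: "y \<in> K"
        have yR: "\<bar>y\<bar> \<le> R" using R[OF y] .
        define u where "u = l * y + b"
        define t where "t = \<delta> * y"
        have tsmall: "\<bar>t\<bar> < min d0 1"
        proof -
          have "\<bar>t\<bar> = \<delta> * \<bar>y\<bar>" using \<delta> by (simp add: t_def abs_mult)
          also have "\<dots> \<le> \<delta> * R" using yR \<delta> by (simp add: mult_left_mono)
          also have "\<dots> < \<delta> * R1" using \<delta> by (simp add: R1_def)
          also have "\<dots> = min d0 1 / 2" using R1 by (simp add: \<delta>_def)
          also have "\<dots> < min d0 1" using d0 by (simp add: min_def)
          finally show ?thesis .
        qed
        have uB: "\<bar>u\<bar> \<le> B - 1"
        proof -
          have "\<bar>u\<bar> \<le> \<bar>l\<bar> * \<bar>y\<bar> + \<bar>b\<bar>" unfolding u_def by (metis abs_mult abs_triangle_ineq)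
          also have "\<dots> \<le> \<bar>l\<bar> * R1 + \<bar>b\<bar>" using yR by (intro add_right_mono mult_left_mono) (auto simp: R1_def)
          finally show ?thesis by (simp add: B_def)
        qed
        obtain \<xi> where xi: "\<bar>\<xi> - u\<bar> \<le> \<bar>t\<bar>" "\<sigma> (u + t) - \<sigma> u = t * \<Delta> \<xi>"
          using mvt_abs[OF dsig, of u t] by blast
        have gy: "g y = y ^ Suc k * \<Delta> \<xi>"
        proof -
          have "(l + \<delta>) * y + b = u + t" by (simp add: u_def t_def algebra_simps)
          then have "g y = y ^ k * (\<sigma> (u + t) - \<sigma> u) / \<delta>"
            unfolding g_def using \<delta> by (simp add: u_def field_simps)
          also have "\<dots> = y ^ k * (t * \<Delta> \<xi>) / \<delta>" by (simp only: xi(2))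
          also have "\<dots> = y ^ Suc k * \<Delta> \<xi>" using \<delta> by (simp add: t_def field_simps)
          finally show ?thesis .
        qed
        have inB: "u \<in> {-B..B}" "\<xi> \<in> {-B..B}" using uB xi(1) tsmall by auto
        have "dist \<xi> u < d0" using xi(1) tsmall by (simp add: dist_real_def)
        then have close: "\<bar>\<Delta> \<xi> - \<Delta> u\<bar> < \<epsilon> / R1 ^ Suc k" using dd[OF inB(1) inB(2)] by (simp add: dist_real_def)
        have "\<bar>y ^ Suc k * \<Delta> (l * y + b) - g y\<bar> = \<bar>y\<bar> ^ Suc k * \<bar>\<Delta> \<xi> - \<Delta> u\<bar>"
          unfolding gy u_def[symmetric] by (simp add: abs_mult[symmetric] power_abs[symmetric] algebra_simps)
        also have "\<dots> \<le> R1 ^ Suc k * \<bar>\<Delta> \<xi> - \<Delta> u\<bar>"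
          using yR by (intro mult_right_mono power_mono) (auto simp: R1_def)
        also have "\<dots> < R1 ^ Suc k * (\<epsilon> / R1 ^ Suc k)" using close RK by (intro mult_strict_left_mono) auto
        also have "\<dots> = \<epsilon>" using R1 by (simp del: power_Suc)
        finally show "\<bar>y ^ Suc k * \<Delta> (l * y + b) - g y\<bar> < \<epsilon>" .
      qed
      then show "\<exists>h\<in>M1 \<zeta>. \<forall>y\<in>K. \<bar>y ^ Suc k * \<Delta> (l * y + b) - h y\<bar> < \<epsilon>"
        using gM by (intro bexI[of _ g]) auto
    qed
  qed
qed

lemma Mk_point:
  assumes "\<phi> \<in> Mk \<zeta> k" "\<phi> a \<noteq> 0"
  shows "(\<lambda>y. y ^ k) \<in> M1 \<zeta>"
proof -
  have "(\<lambda>y. y ^ k * \<phi> (0 * y + a)) \<in> M1 \<zeta>" using assms(1) unfolding Mk_def by blast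
  then have "(\<lambda>y. (1 / \<phi> a) * (y ^ k * \<phi> (0 * y + a))) \<in> M1 \<zeta>" by (rule M1_scale)
  then show ?thesis using assms(2) by simp
qed

lemma Mk_nonconst:
  assumes phi: "\<phi> \<in> Mk \<zeta> k" and cphi: "continuous_on UNIV \<phi>" and ne: "\<phi> a \<noteq> \<phi> c"
  shows "(\<lambda>y. y ^ Suc k) \<in> M1 \<zeta>"
proof -
  have "\<exists>a c. a < c \<and> \<phi> a \<noteq> \<phi> c"
  proof (cases "a < c")
    case True then show ?thesis using ne by blast
  next
    case False
    then have "c < a" using ne by (cases "a = c") auto
    then show ?thesis using ne by (intro exI[of _ c] exI[of _ a]) auto
  qed
  then obtain a c where ac: "a < c" "\<phi> a \<noteq> \<phi> c" by blast
  have "(\<lambda>y. (\<phi> (y + (c - a)) - \<phi> y) / (c - a)) \<in> Mk \<zeta> (Suc k)"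
    by (rule Mk_diff[OF phi cphi]) (use ac in auto)
  moreover have "(\<phi> (a + (c - a)) - \<phi> a) / (c - a) \<noteq> 0" using ac by auto
  ultimately show ?thesis by (rule Mk_point)
qed

lemma avg_close:
  fixes \<phi> :: "real \<Rightarrow> real"
  assumes cphi: "continuous_on UNIV \<phi>" and e: "0 < e"
  shows "\<exists>d>0. \<forall>h. 0 < h \<and> h < d \<longrightarrow> \<bar>integral {z..z+h} \<phi> / h - \<phi> z\<bar> \<le> e"
proof -
  obtain d where d: "d > 0" "\<And>x. dist x z < d \<Longrightarrow> dist (\<phi> x) (\<phi> z) < e"
    using cphi e unfolding continuous_on_iff by blast
  have "\<bar>integral {z..z+h} \<phi> / h - \<phi> z\<bar> \<le> e" if h: "0 < h" "h < d" for h
  proof -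
    have "\<bar>integral {z..z+h} \<phi> - (z + h - z) * \<phi> z\<bar> \<le> (z + h - z) * e"
    proof (rule piece_bound)
      fix x assume "x \<in> {z..z+h}"
      then have "dist x z < d" using h by (auto simp: dist_real_def)
      from d(2)[OF this] show "\<bar>\<phi> x - \<phi> z\<bar> \<le> e" by (simp add: dist_real_def)
    qed (use h in \<open>auto intro: continuous_on_subset[OF cphi]\<close>)
    then have "\<bar>integral {z..z+h} \<phi> - h * \<phi> z\<bar> \<le> h * e" by simp
    then have "\<bar>integral {z..z+h} \<phi> - h * \<phi> z\<bar> / h \<le> e" using h by (simp add: divide_le_eq mult.commute)
    moreover have "\<bar>integral {z..z+h} \<phi> - h * \<phi> z\<bar> / h = \<bar>integral {z..z+h} \<phi> / h - \<phi> z\<bar>"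
      using h by (simp add: field_simps)
    ultimately show ?thesis by simp
  qed
  then show ?thesis using d(1) by blast
qed

lemma tri3: "\<bar>(a::real) - b - c\<bar> \<le> \<bar>a\<bar> + \<bar>b\<bar> + \<bar>c\<bar>"
  using abs_triangle_ineq4[of "a - b" c] abs_triangle_ineq4[of a b] by linarith

lemma affine_of_const_diff:
  fixes \<phi> :: "real \<Rightarrow> real"
  assumes cphi: "continuous_on UNIV \<phi>"
    and H: "\<And>h y. 0 < h \<Longrightarrow> \<phi> (y + h) - \<phi> y = \<phi> h - \<phi> 0"
  shows "\<phi> x = (\<phi> 1 - \<phi> 0) * x + \<phi> 0"
proof -
  define \<sigma> where "\<sigma> = (\<lambda>h y. integral {y..y+h} \<phi> / h)"
  have lin: "\<sigma> h y = \<sigma> h 0 + y * (\<sigma> h 1 - \<sigma> h 0)" if h: "0 < h" for h y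
  proof -
    define s where "s = (\<phi> h - \<phi> 0) / h"
    have d: "((\<lambda>y. \<sigma> h y - s * y) has_real_derivative 0) (at x)" for x
    proof -
      have "(\<sigma> h has_real_derivative s) (at x)"
        using avg_deriv[OF cphi h, of x] H[OF h, of x] unfolding \<sigma>_def s_def by simp
      then have "((\<lambda>y. \<sigma> h y - s * y) has_real_derivative s - s * 1) (at x)"
        by (intro DERIV_diff DERIV_cmult DERIV_ident)
      then show ?thesis by simp
    qed
    have "\<And>y. \<sigma> h y - s * y = \<sigma> h 0 - s * 0" using DERIV_isconst_all[of "\<lambda>y. \<sigma> h y - s * y"] d by blast
    then have E: "\<And>y. \<sigma> h y - s * y = \<sigma> h 0" by simp
    from E[of y] E[of 1] show ?thesis by (simp add: algebra_simps)
  qed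
  show ?thesis
  proof (rule ccontr)
    assume ne: "\<phi> x \<noteq> (\<phi> 1 - \<phi> 0) * x + \<phi> 0"
    define D where "D = \<bar>\<phi> x - ((\<phi> 1 - \<phi> 0) * x + \<phi> 0)\<bar>"
    have D: "D > 0" using ne by (simp add: D_def)
    have px: "1 + \<bar>x\<bar> > 0" by (simp add: add_pos_nonneg)
    define e where "e = D / (4 * (1 + \<bar>x\<bar>))"
    have e: "e > 0" using D px by (simp add: e_def)
    obtain d1 where d1: "d1 > 0" "\<And>h. 0 < h \<Longrightarrow> h < d1 \<Longrightarrow> \<bar>\<sigma> h x - \<phi> x\<bar> \<le> e"
      using avg_close[OF cphi e, of x] unfolding \<sigma>_def by blast
    obtain d2 where d2: "d2 > 0" "\<And>h. 0 < h \<Longrightarrow> h < d2 \<Longrightarrow> \<bar>\<sigma> h 0 - \<phi> 0\<bar> \<le> e"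
      using avg_close[OF cphi e, of 0] unfolding \<sigma>_def by blast
    obtain d3 where d3: "d3 > 0" "\<And>h. 0 < h \<Longrightarrow> h < d3 \<Longrightarrow> \<bar>\<sigma> h 1 - \<phi> 1\<bar> \<le> e"
      using avg_close[OF cphi e, of 1] unfolding \<sigma>_def by blast
    define h where "h = min d1 (min d2 d3) / 2"
    have h: "0 < h" "h < d1" "h < d2" "h < d3" using d1 d2 d3 by (auto simp: h_def min_def)
    have a1: "\<bar>\<sigma> h x - \<phi> x\<bar> \<le> e" and a2: "\<bar>\<sigma> h 0 - \<phi> 0\<bar> \<le> e" and a3: "\<bar>\<sigma> h 1 - \<phi> 1\<bar> \<le> e"
      using d1 d2 d3 h by auto
    have eq: "\<phi> x - ((\<phi> 1 - \<phi> 0) * x + \<phi> 0) = (\<phi> x - \<sigma> h x) - (\<phi> 0 - \<sigma> h 0) - x * ((\<phi> 1 - \<sigma> h 1) - (\<phi> 0 - \<sigma> h 0))"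
      using lin[OF h(1), of x] by (simp add: algebra_simps)
    have "D \<le> \<bar>\<phi> x - \<sigma> h x\<bar> + \<bar>\<phi> 0 - \<sigma> h 0\<bar> + \<bar>x\<bar> * (\<bar>\<phi> 1 - \<sigma> h 1\<bar> + \<bar>\<phi> 0 - \<sigma> h 0\<bar>)"
    proof -
      have "D = \<bar>(\<phi> x - \<sigma> h x) - (\<phi> 0 - \<sigma> h 0) - x * ((\<phi> 1 - \<sigma> h 1) - (\<phi> 0 - \<sigma> h 0))\<bar>"
        unfolding D_def eq ..
      also have "\<dots> \<le> \<bar>\<phi> x - \<sigma> h x\<bar> + \<bar>\<phi> 0 - \<sigma> h 0\<bar> + \<bar>x * ((\<phi> 1 - \<sigma> h 1) - (\<phi> 0 - \<sigma> h 0))\<bar>"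
        by (rule tri3)
      also have "\<bar>x * ((\<phi> 1 - \<sigma> h 1) - (\<phi> 0 - \<sigma> h 0))\<bar> \<le> \<bar>x\<bar> * (\<bar>\<phi> 1 - \<sigma> h 1\<bar> + \<bar>\<phi> 0 - \<sigma> h 0\<bar>)"
        by (simp add: abs_mult mult_left_mono)
      finally show ?thesis by simp
    qed
    also have "\<dots> \<le> e + e + \<bar>x\<bar> * (e + e)"
      using a1 a2 a3 by (intro add_mono mult_left_mono) auto
    also have "\<dots> = 2 * (1 + \<bar>x\<bar>) * e" by (simp add: algebra_simps)
    also have "\<dots> = D / 2"
    proof -
      have "2 * (1 + \<bar>x\<bar>) * e = (2 * (1 + \<bar>x\<bar>)) * D / (4 * (1 + \<bar>x\<bar>))" unfolding e_def by simp
      also have "\<dots> = D / 2" using px by (simp add: field_simps)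
      finally show ?thesis .
    qed
    finally show False using D by simp
  qed
qed

lemma M1_id_sq:
  assumes c: "continuous_on UNIV \<zeta>" and na: "\<not> (\<exists>a b. \<forall>x. \<zeta> x = a * x + b)"
  shows "(\<lambda>y. y) \<in> M1 \<zeta>" "(\<lambda>y. y ^ 2) \<in> M1 \<zeta>"
proof -
  have z0: "\<zeta> \<in> Mk \<zeta> 0" unfolding Mk_def using M1_neuron by simp
  have "\<exists>a c. \<zeta> a \<noteq> \<zeta> c"
  proof (rule ccontr)
    assume "\<not> (\<exists>a c. \<zeta> a \<noteq> \<zeta> c)"
    then have "\<forall>x. \<zeta> x = 0 * x + \<zeta> 0" by auto
    then show False using na by blast
  qed
  then obtain a c where "\<zeta> a \<noteq> \<zeta> c" by blast
  from Mk_nonconst[OF z0 c this] show "(\<lambda>y. y) \<in> M1 \<zeta>" by simp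
  have "\<exists>h y. 0 < h \<and> \<zeta> (y + h) - \<zeta> y \<noteq> \<zeta> h - \<zeta> 0"
  proof (rule ccontr)
    assume "\<not> (\<exists>h y. 0 < h \<and> \<zeta> (y + h) - \<zeta> y \<noteq> \<zeta> h - \<zeta> 0)"
    then have "\<And>x. \<zeta> x = (\<zeta> 1 - \<zeta> 0) * x + \<zeta> 0"
      by (intro affine_of_const_diff[OF c]) auto
    then show False using na by blast
  qed
  then obtain h y where hy: "0 < h" "\<zeta> (y + h) - \<zeta> y \<noteq> \<zeta> h - \<zeta> 0" by blast
  have psi: "(\<lambda>y. (\<zeta> (y + h) - \<zeta> y) / h) \<in> Mk \<zeta> (Suc 0)" by (rule Mk_diff[OF z0 c hy(1)])
  have cpsi: "continuous_on UNIV (\<lambda>y. (\<zeta> (y + h) - \<zeta> y) / h)"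
    using hy(1) by (intro continuous_intros continuous_on_compose2[OF c]) auto
  have "(\<zeta> (y + h) - \<zeta> y) / h \<noteq> (\<zeta> (0 + h) - \<zeta> 0) / h" using hy by (auto simp: divide_cancel_right)
  from Mk_nonconst[OF psi cpsi this] show "(\<lambda>y. y ^ 2) \<in> M1 \<zeta>" by (simp add: numeral_2_eq_2)
qed

lemma real_linear_inner:
  fixes f :: "'a::euclidean_space \<Rightarrow> real"
  assumes "bounded_linear f"
  shows "\<exists>a. \<forall>x. f x = inner a x"
proof -
  interpret bounded_linear f by fact
  have "f x = inner (\<Sum>b\<in>Basis. f b *\<^sub>R b) x" for x
  proof -
    have "f x = f (\<Sum>b\<in>Basis. (x \<bullet> b) *\<^sub>R b)" by (simp add: euclidean_representation)
    also have "\<dots> = (\<Sum>b\<in>Basis. (x \<bullet> b) * f b)" by (simp add: sum scale)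
    also have "\<dots> = (\<Sum>b\<in>Basis. f b * inner b x)" by (simp add: inner_commute mult.commute)
    also have "\<dots> = inner (\<Sum>b\<in>Basis. f b *\<^sub>R b) x" by (simp add: inner_sum_left)
    finally show ?thesis .
  qed
  then show ?thesis by blast
qed

lemma approxI:
  assumes "\<And>K \<epsilon>. compact K \<Longrightarrow> 0 < \<epsilon> \<Longrightarrow> \<exists>h\<in>F. \<forall>x\<in>K. \<bar>f x - h x\<bar> < \<epsilon>"
  shows "approx F f"
  unfolding approx_def using assms by blast

lemma lay_add:
  assumes "f \<in> lay \<zeta> L" "g \<in> lay \<zeta> L"
  shows "(\<lambda>x. f x + g x) \<in> lay \<zeta> L"
proof (cases L)
  case 0
  obtain a b where f: "f = (\<lambda>x. inner a x + b)" using assms(1) 0 lay0E by blast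
  obtain a' b' where g: "g = (\<lambda>x. inner a' x + b')" using assms(2) 0 lay0E by blast
  show ?thesis unfolding 0 by (rule lay0I[of _ "a + a'" "b + b'"]) (auto simp: f g inner_add_left)
next
  case (Suc L') then show ?thesis using assms lay_Suc_add by blast
qed

lemma lay_scale: "f \<in> lay \<zeta> L \<Longrightarrow> (\<lambda>x. c * f x) \<in> lay \<zeta> L"
  using lay_affine[of f \<zeta> L c 0] by simp

lemma lay_comp_M1:
  fixes u :: "'a::real_inner \<Rightarrow> real"
  assumes c: "continuous_on UNIV \<zeta>" and u: "u \<in> lay \<zeta> L" and psi: "\<psi> \<in> M1 \<zeta>"
  shows "approx (lay \<zeta> (Suc L)) (\<lambda>x. \<psi> (u x))"
  unfolding approx_def
proof (intro allI impI)
  fix K :: "'a set" and \<epsilon> :: real assume K: "compact K" and e: "0 < \<epsilon>"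
  have cu: "continuous_on UNIV u" using lay_cont[OF c u] .
  have uK: "compact (u ` K)" by (rule compact_continuous_image[OF continuous_on_subset[OF cu] K]) auto
  obtain g where g: "g \<in> (lay \<zeta> (Suc 0) :: (real \<Rightarrow> real) set)" "\<And>y. y \<in> u ` K \<Longrightarrow> \<bar>\<psi> y - g y\<bar> < \<epsilon>"
    using approxD[OF _ uK e, of "lay \<zeta> (Suc 0)" \<psi>] psi unfolding M1_def by blast
  obtain Kg c d where gd: "g = (\<lambda>x. (\<Sum>k\<in>Kg. c k * \<zeta> (k x)) + d)" "finite Kg" "Kg \<subseteq> (lay \<zeta> 0 :: (real \<Rightarrow> real) set)"
    using g(1) by (rule lay_SucE)
  have "(\<lambda>x. (\<Sum>k\<in>Kg. c k * \<zeta> ((\<lambda>k x. k (u x)) k x)) + d) \<in> lay \<zeta> (Suc L)"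
  proof (rule lay_Suc_sum[OF gd(2)])
    fix k assume "k \<in> Kg"
    then obtain a b where k: "k = (\<lambda>x. inner a x + b)" using gd(3) lay0E by blast
    show "(\<lambda>x. k (u x)) \<in> lay \<zeta> L" unfolding k inner_real_def using lay_affine[OF u, of a b] by simp
  qed
  then have "(\<lambda>x. g (u x)) \<in> lay \<zeta> (Suc L)" by (simp add: gd(1))
  moreover have "\<forall>x\<in>K. \<bar>\<psi> (u x) - g (u x)\<bar> < \<epsilon>" using g(2) by auto
  ultimately show "\<exists>h\<in>lay \<zeta> (Suc L). \<forall>x\<in>K. \<bar>\<psi> (u x) - h x\<bar> < \<epsilon>" by (intro bexI[of _ "\<lambda>x. g (u x)"])
qed

lemma approx_comp_M1:
  fixes u :: "'a::real_inner \<Rightarrow> real"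
  assumes c: "continuous_on UNIV \<zeta>" and u: "approx (lay \<zeta> L) u" and psi: "\<psi> \<in> M1 \<zeta>"
    and cpsi: "continuous_on UNIV \<psi>"
  shows "approx (lay \<zeta> (Suc L)) (\<lambda>x. \<psi> (u x))"
proof (rule approx_trans, rule approxI)
  fix K :: "'a set" and \<epsilon> :: real assume K: "compact K" and e: "0 < \<epsilon>"
  obtain u1 where u1: "u1 \<in> lay \<zeta> L" "\<And>x. x \<in> K \<Longrightarrow> \<bar>u x - u1 x\<bar> < 1"
    using approxD[OF u K, of 1] by auto
  have u1K: "compact (u1 ` K)"
    by (rule compact_continuous_image[OF continuous_on_subset[OF lay_cont[OF c u1(1)]] K]) auto
  obtain R where R0: "R \<ge> 0" and R: "\<And>y. y \<in> u1 ` K \<Longrightarrow> \<bar>y\<bar> \<le> R" using bounded_real_ex[OF u1K] by blast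
  have "uniformly_continuous_on {-(R+2)..R+2} \<psi>"
    by (rule compact_uniformly_continuous) (auto intro: continuous_on_subset[OF cpsi])
  then obtain d where d: "d > 0" and dd: "\<And>x x'. x \<in> {-(R+2)..R+2} \<Longrightarrow> x' \<in> {-(R+2)..R+2} \<Longrightarrow> dist x' x < d \<Longrightarrow> dist (\<psi> x') (\<psi> x) < \<epsilon>"
    unfolding uniformly_continuous_on_def using e by blast
  have md: "min d 1 > 0" using d by simp
  obtain u2 where u2: "u2 \<in> lay \<zeta> L" "\<And>x. x \<in> K \<Longrightarrow> \<bar>u x - u2 x\<bar> < min d 1"
    using approxD[OF u K md] by auto
  have "approx (lay \<zeta> (Suc L)) (\<lambda>x. \<psi> (u2 x))" by (rule lay_comp_M1[OF c u2(1) psi])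
  moreover have "\<forall>x\<in>K. \<bar>\<psi> (u x) - \<psi> (u2 x)\<bar> < \<epsilon>"
  proof
    fix x assume x: "x \<in> K"
    have "\<bar>u1 x\<bar> \<le> R" using R x by auto
    then have a: "u x \<in> {-(R+2)..R+2}" "u2 x \<in> {-(R+2)..R+2}" using u1(2)[OF x] u2(2)[OF x] by auto
    have "dist (u2 x) (u x) < d" using u2(2)[OF x] by (auto simp: dist_real_def)
    from dd[OF a(1) a(2) this] show "\<bar>\<psi> (u x) - \<psi> (u2 x)\<bar> < \<epsilon>" by (simp add: dist_real_def abs_minus_commute)
  qed
  ultimately show "\<exists>h\<in>{g. approx (lay \<zeta> (Suc L)) g}. \<forall>x\<in>K. \<bar>\<psi> (u x) - h x\<bar> < \<epsilon>"
    by (intro bexI[of _ "\<lambda>x. \<psi> (u2 x)"]) auto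
qed

lemma approx_lay_add: "approx (lay \<zeta> L) f \<Longrightarrow> approx (lay \<zeta> L) g \<Longrightarrow> approx (lay \<zeta> L) (\<lambda>x. f x + g x)"
  by (rule approx_add) (auto intro: lay_add)

lemma approx_lay_scale: "approx (lay \<zeta> L) f \<Longrightarrow> approx (lay \<zeta> L) (\<lambda>x. c * f x)"
  by (rule approx_scale) (auto intro: lay_scale)

context
  fixes \<zeta> :: "real \<Rightarrow> real"
  assumes c: "continuous_on UNIV \<zeta>" and na: "\<not> (\<exists>a b. \<forall>x. \<zeta> x = a * x + b)"
begin

lemma approx_lay_Suc: "approx (lay \<zeta> L) f \<Longrightarrow> approx (lay \<zeta> (Suc L)) f"
  using approx_comp_M1[OF c _ M1_id_sq(1)[OF c na], of L f] by (simp add: continuous_on_id)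

lemma approx_lay_mono: "approx (lay \<zeta> L) f \<Longrightarrow> L \<le> L' \<Longrightarrow> approx (lay \<zeta> L') f"
proof (induction L' )
  case 0 then show ?case by simp
next
  case (Suc L')
  then show ?case by (cases "L \<le> L'") (auto intro: approx_lay_Suc simp: le_Suc_eq)
qed

lemma approx_lay_sq: "approx (lay \<zeta> L) f \<Longrightarrow> approx (lay \<zeta> (Suc L)) (\<lambda>x. (f x)^2)"
  using approx_comp_M1[OF c _ M1_id_sq(2)[OF c na], of L f] by (simp add: continuous_intros)

lemma approx_lay_mult:
  assumes "approx (lay \<zeta> L) f" "approx (lay \<zeta> L) g"
  shows "approx (lay \<zeta> (Suc L)) (\<lambda>x. f x * g x)"
proof -
  have s: "approx (lay \<zeta> L) (\<lambda>x. f x + g x)" using assms by (rule approx_lay_add)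
  have d: "approx (lay \<zeta> L) (\<lambda>x. f x + (-1) * g x)" using assms(1) approx_lay_scale[OF assms(2)] by (rule approx_lay_add)
  have q1: "approx (lay \<zeta> (Suc L)) (\<lambda>x. (f x + g x)^2)" by (rule approx_lay_sq[OF s])
  have q2: "approx (lay \<zeta> (Suc L)) (\<lambda>x. (f x + (-1) * g x)^2)" by (rule approx_lay_sq[OF d])
  have "approx (lay \<zeta> (Suc L)) (\<lambda>x. (1/4) * (f x + g x)^2 + (-1/4) * (f x + (-1) * g x)^2)"
    by (rule approx_lay_add[OF approx_lay_scale[OF q1] approx_lay_scale[OF q2]])
  moreover have "(\<lambda>x. (1/4) * (f x + g x)^2 + (-1/4) * (f x + (-1) * g x)^2) = (\<lambda>x. f x * g x)"
    by (auto simp: power2_eq_square algebra_simps)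
  ultimately show ?thesis by simp
qed

lemma poly_approx_lay:
  fixes f :: "'a::euclidean_space \<Rightarrow> real"
  assumes "real_polynomial_function f"
  shows "\<exists>L. approx (lay \<zeta> L) f"
  using assms
proof (induction rule: real_polynomial_function.induct)
  case (linear f)
  then obtain a where "\<forall>x. f x = inner a x" using real_linear_inner by blast
  then have "f \<in> lay \<zeta> 0" by (intro lay0I[of _ a 0]) auto
  then show ?case by (blast intro: approx_mem)
next
  case (const c)
  have "(\<lambda>x::'a. c) \<in> lay \<zeta> 0" by (rule lay0I[of _ 0 c]) auto
  then show ?case by (blast intro: approx_mem)
next
  case (add f g)
  then obtain L1 L2 where "approx (lay \<zeta> L1) f" "approx (lay \<zeta> L2) g" by blast
  then have "approx (lay \<zeta> (max L1 L2)) f" "approx (lay \<zeta> (max L1 L2)) g" by (auto intro: approx_lay_mono)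
  then show ?case by (blast intro: approx_lay_add)
next
  case (mult f g)
  then obtain L1 L2 where "approx (lay \<zeta> L1) f" "approx (lay \<zeta> L2) g" by blast
  then have "approx (lay \<zeta> (max L1 L2)) f" "approx (lay \<zeta> (max L1 L2)) g" by (auto intro: approx_lay_mono)
  then show ?case by (blast intro: approx_lay_mult)
qed

lemma dense_lay:
  fixes f :: "'a::euclidean_space \<Rightarrow> real"
  assumes cf: "continuous_on UNIV f" and K: "compact K" and e: "0 < \<epsilon>"
  shows "\<exists>L. \<exists>h\<in>lay \<zeta> (Suc L). \<forall>x\<in>K. \<bar>f x - h x\<bar> < \<epsilon>"
proof -
  obtain g where g: "polynomial_function g" "\<forall>x\<in>K. norm (f x - g x) < \<epsilon>/2"
    using Stone_Weierstrass_polynomial_function[OF K continuous_on_subset[OF cf] half_gt_zero[OF e]] by auto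
  obtain L where "approx (lay \<zeta> L) g" using poly_approx_lay g(1) real_polynomial_function_eq by blast
  then have "approx (lay \<zeta> (Suc L)) g" by (rule approx_lay_Suc)
  then obtain h where h: "h \<in> lay \<zeta> (Suc L)" "\<And>x. x \<in> K \<Longrightarrow> \<bar>g x - h x\<bar> < \<epsilon>/2"
    using approxD[OF _ K half_gt_zero[OF e]] by blast
  have "\<forall>x\<in>K. \<bar>f x - h x\<bar> < \<epsilon>"
  proof
    fix x assume x: "x \<in> K"
    then have "\<bar>f x - g x\<bar> < \<epsilon>/2" using g(2) by auto
    with h(2)[OF x] show "\<bar>f x - h x\<bar> < \<epsilon>" by linarith
  qed
  then show ?thesis using h(1) by blast
qed

end

definition lincomb :: "real list \<Rightarrow> real list \<Rightarrow> real" where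
  "lincomb c v = sum_list (map2 (*) c v)"

lemma lincomb_map:
  assumes "distinct us"
  shows "lincomb (map cf us) (map F us) = (\<Sum>k\<in>set us. cf k * F k)"
proof -
  have "lincomb (map cf us) (map F us) = sum_list (map (\<lambda>k. cf k * F k) us)"
    unfolding lincomb_def by (simp add: zip_map1 zip_map2 zip_same_conv_map o_def)
  also have "\<dots> = (\<Sum>k\<in>set us. cf k * F k)" by (rule sum_list_distinct_conv_sum_set[OF assms])
  finally show ?thesis .
qed

lemma combine_layer:
  fixes H :: "('a \<Rightarrow> real) set"
  assumes H: "finite H"
    and rep: "\<And>h. h \<in> H \<Longrightarrow> h = (\<lambda>x. (\<Sum>k\<in>Kf h. cf h k * \<zeta> (k x)) + df h) \<and> finite (Kf h)"
    and us: "set us = (\<Union>h\<in>H. Kf h)" "distinct us"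
    and g: "\<And>x. g x = map (\<lambda>k. \<zeta> (k x)) us"
  shows "\<forall>h\<in>H. \<exists>c d. length c = length us \<and> (\<forall>x. h x = lincomb c (g x) + d)"
proof
  fix h assume h: "h \<in> H"
  define c where "c = map (\<lambda>k. if k \<in> Kf h then cf h k else 0) us"
  have "h x = lincomb c (g x) + df h" for x
  proof -
    have sub: "Kf h \<subseteq> set us" using us(1) h by auto
    have "lincomb c (g x) = (\<Sum>k\<in>set us. (if k \<in> Kf h then cf h k else 0) * \<zeta> (k x))"
      unfolding c_def g by (rule lincomb_map[OF us(2)])
    also have "\<dots> = (\<Sum>k\<in>set us. (if k \<in> Kf h then cf h k * \<zeta> (k x) else 0))"
      by (rule sum.cong) auto
    also have "\<dots> = (\<Sum>k\<in>set us \<inter> Kf h. cf h k * \<zeta> (k x))"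
      by (simp add: sum.inter_restrict)
    also have "set us \<inter> Kf h = Kf h" using sub by auto
    finally have "lincomb c (g x) = (\<Sum>k\<in>Kf h. cf h k * \<zeta> (k x))" .
    moreover have "h x = (\<Sum>k\<in>Kf h. cf h k * \<zeta> (k x)) + df h"
      using fun_cong[OF conjunct1[OF rep[OF h]], of x] by simp
    ultimately show ?thesis by simp
  qed
  moreover have "length c = length us" by (simp add: c_def)
  ultimately show "\<exists>c d. length c = length us \<and> (\<forall>x. h x = lincomb c (g x) + d)" by blast
qed

lemma lay_feat:
  fixes \<zeta> :: "real \<Rightarrow> real"
  shows "finite H \<Longrightarrow> H \<subseteq> (lay \<zeta> (Suc L) :: ('a::real_inner \<Rightarrow> real) set) \<Longrightarrow>
    \<exists>g\<in>mlp_feat \<zeta>. \<exists>n. (\<forall>x. length (g x) = n) \<and> (\<forall>h\<in>H. \<exists>c d. length c = n \<and> (\<forall>x. h x = lincomb c (g x) + d))"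
proof (induction L arbitrary: H)
  case 0
  have "\<forall>h\<in>H. \<exists>K c d. h = (\<lambda>x. (\<Sum>k\<in>K. c k * \<zeta> (k x)) + d) \<and> finite K \<and> K \<subseteq> lay \<zeta> 0"
  proof
    fix h assume "h \<in> H"
    then have "h \<in> lay \<zeta> (Suc 0)" using 0(2) by auto
    then obtain K c d where "h = (\<lambda>x. (\<Sum>k\<in>K. c k * \<zeta> (k x)) + d)" "finite K" "K \<subseteq> lay \<zeta> 0"
      by (rule lay_SucE)
    then show "\<exists>K c d. h = (\<lambda>x. (\<Sum>k\<in>K. c k * \<zeta> (k x)) + d) \<and> finite K \<and> K \<subseteq> lay \<zeta> 0" by blast
  qed
  then have "\<exists>Kf. \<forall>h\<in>H. \<exists>c d. h = (\<lambda>x. (\<Sum>k\<in>Kf h. c k * \<zeta> (k x)) + d) \<and> finite (Kf h) \<and> Kf h \<subseteq> lay \<zeta> 0" by (rule bchoice)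
  then obtain Kf where "\<forall>h\<in>H. \<exists>c d. h = (\<lambda>x. (\<Sum>k\<in>Kf h. c k * \<zeta> (k x)) + d) \<and> finite (Kf h) \<and> Kf h \<subseteq> lay \<zeta> 0" by blast
  then have "\<exists>cf. \<forall>h\<in>H. \<exists>d. h = (\<lambda>x. (\<Sum>k\<in>Kf h. cf h k * \<zeta> (k x)) + d) \<and> finite (Kf h) \<and> Kf h \<subseteq> lay \<zeta> 0" by (rule bchoice)
  then obtain cf where "\<forall>h\<in>H. \<exists>d. h = (\<lambda>x. (\<Sum>k\<in>Kf h. cf h k * \<zeta> (k x)) + d) \<and> finite (Kf h) \<and> Kf h \<subseteq> lay \<zeta> 0" by blast
  then have "\<exists>df. \<forall>h\<in>H. h = (\<lambda>x. (\<Sum>k\<in>Kf h. cf h k * \<zeta> (k x)) + df h) \<and> finite (Kf h) \<and> Kf h \<subseteq> lay \<zeta> 0" by (rule bchoice)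
  then obtain df where "\<forall>h\<in>H. h = (\<lambda>x. (\<Sum>k\<in>Kf h. cf h k * \<zeta> (k x)) + df h) \<and> finite (Kf h) \<and> Kf h \<subseteq> lay \<zeta> 0" by blast
  then have rep: "\<And>h. h \<in> H \<Longrightarrow> h = (\<lambda>x. (\<Sum>k\<in>Kf h. cf h k * \<zeta> (k x)) + df h) \<and> finite (Kf h) \<and> Kf h \<subseteq> lay \<zeta> 0"
    by (rule bspec)
  have repK: "\<And>h. h \<in> H \<Longrightarrow> finite (Kf h) \<and> Kf h \<subseteq> lay \<zeta> 0" using rep by (rule conjunct2)
  have fU: "finite (\<Union>h\<in>H. Kf h)" using 0(1) repK by auto
  obtain us where us: "set us = (\<Union>h\<in>H. Kf h)" "distinct us" using finite_distinct_list[OF fU] by blast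
  have "\<forall>k\<in>set us. \<exists>a b. k = (\<lambda>x. inner a x + b)"
  proof
    fix k assume "k \<in> set us"
    then have "k \<in> lay \<zeta> 0" using us(1) repK by auto
    then obtain a b where "k = (\<lambda>x. inner a x + b)" by (rule lay0E)
    then show "\<exists>a b. k = (\<lambda>x. inner a x + b)" by blast
  qed
  then have "\<exists>af. \<forall>k\<in>set us. \<exists>b. k = (\<lambda>x. inner (af k) x + b)" by (rule bchoice)
  then obtain af where "\<forall>k\<in>set us. \<exists>b. k = (\<lambda>x. inner (af k) x + b)" by blast
  then have "\<exists>bf. \<forall>k\<in>set us. k = (\<lambda>x. inner (af k) x + bf k)" by (rule bchoice)
  then obtain bf where "\<forall>k\<in>set us. k = (\<lambda>x. inner (af k) x + bf k)" by blast
  then have ab: "\<And>k. k \<in> set us \<Longrightarrow> k = (\<lambda>x. inner (af k) x + bf k)" by (rule bspec)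
  define g where "g = (\<lambda>x. map (\<lambda>(a, b). \<zeta> (inner a x + b)) (map (\<lambda>k. (af k, bf k)) us))"
  have gf: "g \<in> mlp_feat \<zeta>" unfolding g_def by (rule mlp_feat.first)
  have gx: "g x = map (\<lambda>k. \<zeta> (k x)) us" for x
  proof -
    have abx: "\<And>k. k \<in> set us \<Longrightarrow> k x = inner (af k) x + bf k"
      using fun_cong[OF ab, of _ x] by simp
    show ?thesis unfolding g_def by (auto intro!: map_cong simp: abx)
  qed
  have "\<forall>h\<in>H. \<exists>c d. length c = length us \<and> (\<forall>x. h x = lincomb c (g x) + d)"
  proof (rule combine_layer[OF 0(1) _ us gx])
    fix h assume h: "h \<in> H"
    show "h = (\<lambda>x. (\<Sum>k\<in>Kf h. cf h k * \<zeta> (k x)) + df h) \<and> finite (Kf h)"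
      by (rule conjI[OF conjunct1[OF rep[OF h]] conjunct1[OF conjunct2[OF rep[OF h]]]])
  qed
  then show ?case using gf gx by (intro bexI[of _ g] exI[of _ "length us"]) auto
next
  case (Suc L)
  have "\<forall>h\<in>H. \<exists>K c d. h = (\<lambda>x. (\<Sum>k\<in>K. c k * \<zeta> (k x)) + d) \<and> finite K \<and> K \<subseteq> lay \<zeta> (Suc L)"
  proof
    fix h assume "h \<in> H"
    then have "h \<in> lay \<zeta> (Suc (Suc L))" using Suc(3) by auto
    then obtain K c d where "h = (\<lambda>x. (\<Sum>k\<in>K. c k * \<zeta> (k x)) + d)" "finite K" "K \<subseteq> lay \<zeta> (Suc L)"
      by (rule lay_SucE)
    then show "\<exists>K c d. h = (\<lambda>x. (\<Sum>k\<in>K. c k * \<zeta> (k x)) + d) \<and> finite K \<and> K \<subseteq> lay \<zeta> (Suc L)" by blast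
  qed
  then have "\<exists>Kf. \<forall>h\<in>H. \<exists>c d. h = (\<lambda>x. (\<Sum>k\<in>Kf h. c k * \<zeta> (k x)) + d) \<and> finite (Kf h) \<and> Kf h \<subseteq> lay \<zeta> (Suc L)" by (rule bchoice)
  then obtain Kf where "\<forall>h\<in>H. \<exists>c d. h = (\<lambda>x. (\<Sum>k\<in>Kf h. c k * \<zeta> (k x)) + d) \<and> finite (Kf h) \<and> Kf h \<subseteq> lay \<zeta> (Suc L)" by blast
  then have "\<exists>cf. \<forall>h\<in>H. \<exists>d. h = (\<lambda>x. (\<Sum>k\<in>Kf h. cf h k * \<zeta> (k x)) + d) \<and> finite (Kf h) \<and> Kf h \<subseteq> lay \<zeta> (Suc L)" by (rule bchoice)
  then obtain cf where "\<forall>h\<in>H. \<exists>d. h = (\<lambda>x. (\<Sum>k\<in>Kf h. cf h k * \<zeta> (k x)) + d) \<and> finite (Kf h) \<and> Kf h \<subseteq> lay \<zeta> (Suc L)" by blast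
  then have "\<exists>df. \<forall>h\<in>H. h = (\<lambda>x. (\<Sum>k\<in>Kf h. cf h k * \<zeta> (k x)) + df h) \<and> finite (Kf h) \<and> Kf h \<subseteq> lay \<zeta> (Suc L)" by (rule bchoice)
  then obtain df where "\<forall>h\<in>H. h = (\<lambda>x. (\<Sum>k\<in>Kf h. cf h k * \<zeta> (k x)) + df h) \<and> finite (Kf h) \<and> Kf h \<subseteq> lay \<zeta> (Suc L)" by blast
  then have rep: "\<And>h. h \<in> H \<Longrightarrow> h = (\<lambda>x. (\<Sum>k\<in>Kf h. cf h k * \<zeta> (k x)) + df h) \<and> finite (Kf h) \<and> Kf h \<subseteq> lay \<zeta> (Suc L)"
    by (rule bspec)
  have repK: "\<And>h. h \<in> H \<Longrightarrow> finite (Kf h) \<and> Kf h \<subseteq> lay \<zeta> (Suc L)" using rep by (rule conjunct2)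
  have fU: "finite (\<Union>h\<in>H. Kf h)" using Suc(2) repK by auto
  obtain us where us: "set us = (\<Union>h\<in>H. Kf h)" "distinct us" using finite_distinct_list[OF fU] by blast
  have "set us \<subseteq> lay \<zeta> (Suc L)" using us(1) repK by auto
  from Suc.IH[OF _ this] obtain g0 n where g0: "g0 \<in> mlp_feat \<zeta>" "\<And>x. length (g0 x) = n"
    "\<forall>k\<in>set us. \<exists>c d. length c = n \<and> (\<forall>x. k x = lincomb c (g0 x) + d)" by auto
  from g0(3) have "\<exists>wf. \<forall>k\<in>set us. \<exists>d. length (wf k) = n \<and> (\<forall>x. k x = lincomb (wf k) (g0 x) + d)" by (rule bchoice)
  then obtain wf where "\<forall>k\<in>set us. \<exists>d. length (wf k) = n \<and> (\<forall>x. k x = lincomb (wf k) (g0 x) + d)" by blast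
  then have "\<exists>ef. \<forall>k\<in>set us. length (wf k) = n \<and> (\<forall>x. k x = lincomb (wf k) (g0 x) + ef k)" by (rule bchoice)
  then obtain ef where "\<forall>k\<in>set us. length (wf k) = n \<and> (\<forall>x. k x = lincomb (wf k) (g0 x) + ef k)" by blast
  then have we: "\<And>k. k \<in> set us \<Longrightarrow> length (wf k) = n \<and> (\<forall>x. k x = lincomb (wf k) (g0 x) + ef k)"
    by (rule bspec)
  define ps where "ps = map (\<lambda>k. (wf k, ef k)) us"
  define g where "g = (\<lambda>x. map (\<lambda>(w, b). \<zeta> (sum_list (map2 (*) w (g0 x)) + b)) ps)"
  have gf: "g \<in> mlp_feat \<zeta>" unfolding g_def
    by (rule mlp_feat.deeper[OF g0(1)]) (auto simp: ps_def we g0(2))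
  have gx: "g x = map (\<lambda>k. \<zeta> (k x)) us" for x
    unfolding g_def ps_def using we by (auto intro!: map_cong simp: lincomb_def)
  have "\<forall>h\<in>H. \<exists>c d. length c = length us \<and> (\<forall>x. h x = lincomb c (g x) + d)"
  proof (rule combine_layer[OF Suc(2) _ us gx])
    fix h assume h: "h \<in> H"
    show "h = (\<lambda>x. (\<Sum>k\<in>Kf h. cf h k * \<zeta> (k x)) + df h) \<and> finite (Kf h)"
      by (rule conjI[OF conjunct1[OF rep[OF h]] conjunct1[OF conjunct2[OF rep[OF h]]]])
  qed
  then show ?case using gf gx by (intro bexI[of _ g] exI[of _ "length us"]) auto
qed

lemma lay_mlp:
  fixes \<zeta> :: "real \<Rightarrow> real"
  assumes "h \<in> (lay \<zeta> (Suc L) :: ('a::real_inner \<Rightarrow> real) set)"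
  shows "h \<in> mlp \<zeta>"
proof -
  obtain g n where g: "g \<in> mlp_feat \<zeta>" "\<And>x. length (g x) = n"
    "\<forall>h'\<in>{h}. \<exists>c d. length c = n \<and> (\<forall>x. h' x = lincomb c (g x) + d)"
    using lay_feat[of "{h}" \<zeta> L] assms by auto
  then obtain c d where c: "length c = n" "\<And>x. h x = lincomb c (g x) + d" by auto
  have "h = (\<lambda>x. sum_list (map2 (*) c (g x)) + d)" using c(2) by (auto simp: lincomb_def)
  then show ?thesis unfolding mlp_def mem_Collect_eq
    by (intro exI[of _ g] exI[of _ c] exI[of _ d] conjI) (use g(1) g(2) c(1) in auto)
qed

lemma conv_res_nth:
  "conv_res A W X $ i $ j = (\<Sum>k\<in>UNIV. (\<Sum>l\<in>UNIV. A $ i $ l * X $ l $ k) * W $ k $ j) + X $ i $ j"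
  unfolding conv_res_def by (simp add: matrix_matrix_mult_def)

lemma conv_res_linear: "linear (conv_res (A :: real^'n^'n) (W :: real^'d^'d))"
proof (rule linearI)
  fix X Y :: "real^'d^'n"
  show "conv_res A W (X + Y) = conv_res A W X + conv_res A W Y"
    by (simp add: vec_eq_iff conv_res_nth distrib_left distrib_right sum.distrib)
next
  fix c :: real and X :: "real^'d^'n"
  show "conv_res A W (c *\<^sub>R X) = c *\<^sub>R conv_res A W X"
  proof -
    have e: "(\<Sum>l\<in>UNIV. A $ i $ l * (c * X $ l $ k)) = c * (\<Sum>l\<in>UNIV. A $ i $ l * X $ l $ k)" for i k
      by (simp add: sum_distrib_left mult.left_commute)
    have e2: "(\<Sum>k\<in>UNIV. (c * s k) * w k) = c * (\<Sum>k\<in>UNIV. s k * w k)" for s w :: "'d \<Rightarrow> real"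
      by (simp add: sum_distrib_left mult.assoc)
    show ?thesis
    proof (simp only: vec_eq_iff, intro allI)
      fix i j
      have "conv_res A W (c *\<^sub>R X) $ i $ j = (\<Sum>k\<in>UNIV. (c * (\<Sum>l\<in>UNIV. A $ i $ l * X $ l $ k)) * W $ k $ j) + c * X $ i $ j"
        unfolding conv_res_nth by (simp add: e)
      also have "\<dots> = c * conv_res A W X $ i $ j" unfolding conv_res_nth e2 by (simp add: distrib_left)
      finally show "conv_res A W (c *\<^sub>R X) $ i $ j = (c *\<^sub>R conv_res A W X) $ i $ j" by simp
    qed
  qed
qed

lemma norm_adj_complete: "norm_adj (complete_graph :: 'n::finite \<Rightarrow> 'n \<Rightarrow> bool) $ i $ j = 1 / real CARD('n)"
proof -
  have "gdeg (complete_graph :: 'n \<Rightarrow> 'n \<Rightarrow> bool) v = real CARD('n)" for v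
    unfolding gdeg_def complete_graph_def by (simp add: UNIV_def[symmetric] del: UNIV_def)
  then show ?thesis unfolding norm_adj_def complete_graph_def by (simp add: real_sqrt_mult_self)
qed

lemma conv_res_inj:
  fixes W :: "real^'d^'d"
  assumes small: "\<And>i j. \<bar>W $ i $ j\<bar> < 1 / real CARD('d)"
  shows "inj (conv_res (norm_adj (complete_graph :: 'n::finite \<Rightarrow> 'n \<Rightarrow> bool)) W)"
proof -
  let ?A = "norm_adj (complete_graph :: 'n \<Rightarrow> 'n \<Rightarrow> bool)"
  let ?N = "real CARD('n)" and ?D = "real CARD('d)"
  have N: "?N > 0" and D: "?D > 0" by auto
  have "X = 0" if LX: "conv_res ?A W X = 0" for X :: "real^'d^'n"
  proof (rule ccontr)
    assume X0: "X \<noteq> 0"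
    define S where "S = (\<lambda>(i, j). \<bar>X $ i $ j\<bar>) ` (UNIV :: ('n \<times> 'd) set)"
    define m where "m = Max S"
    have fS: "finite S" "S \<noteq> {}" by (auto simp: S_def)
    have mge: "\<bar>X $ i $ j\<bar> \<le> m" for i j unfolding m_def by (rule Max_ge[OF fS(1)]) (auto simp: S_def)
    have "m \<in> S" unfolding m_def by (rule Max_in[OF fS])
    then obtain p where p: "m = (case p of (i, j) \<Rightarrow> \<bar>X $ i $ j\<bar>)" unfolding S_def by auto
    obtain i0 j0 where ij0: "m = \<bar>X $ i0 $ j0\<bar>" using p by (cases p) auto
    have mpos: "m > 0"
    proof (rule ccontr)
      assume "\<not> m > 0"
      then have "\<And>i j. X $ i $ j = 0" using mge by (meson abs_le_zero_iff le_less_trans not_le)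
      then have "X = 0" by (simp add: vec_eq_iff)
      then show False using X0 by simp
    qed
    have "X $ i0 $ j0 = - (\<Sum>k\<in>UNIV. (\<Sum>l\<in>UNIV. ?A $ i0 $ l * X $ l $ k) * W $ k $ j0)"
      using arg_cong[OF LX, of "\<lambda>Y. Y $ i0 $ j0"] by (simp add: conv_res_nth eq_neg_iff_add_eq_0 add.commute)
    then have "m = \<bar>\<Sum>k\<in>UNIV. (\<Sum>l\<in>UNIV. ?A $ i0 $ l * X $ l $ k) * W $ k $ j0\<bar>" using ij0 by simp
    also have "\<dots> \<le> (\<Sum>k\<in>UNIV. \<bar>(\<Sum>l\<in>UNIV. ?A $ i0 $ l * X $ l $ k) * W $ k $ j0\<bar>)" by (rule sum_abs)
    also have "\<dots> \<le> (\<Sum>k\<in>UNIV. m * \<bar>W $ k $ j0\<bar>)"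
    proof (rule sum_mono)
      fix k
      have "\<bar>\<Sum>l\<in>UNIV. ?A $ i0 $ l * X $ l $ k\<bar> \<le> (\<Sum>l\<in>UNIV. \<bar>?A $ i0 $ l * X $ l $ k\<bar>)" by (rule sum_abs)
      also have "\<dots> \<le> (\<Sum>l\<in>(UNIV::'n set). m / ?N)"
        by (rule sum_mono) (use mge N in \<open>auto simp: norm_adj_complete abs_mult divide_right_mono\<close>)
      also have "\<dots> = m" using N by simp
      finally have "\<bar>\<Sum>l\<in>UNIV. ?A $ i0 $ l * X $ l $ k\<bar> \<le> m" .
      then show "\<bar>(\<Sum>l\<in>UNIV. ?A $ i0 $ l * X $ l $ k) * W $ k $ j0\<bar> \<le> m * \<bar>W $ k $ j0\<bar>"
        by (simp add: abs_mult mult_right_mono)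
    qed
    also have "\<dots> < (\<Sum>k\<in>(UNIV::'d set). m * (1 / ?D))"
      by (rule sum_strict_mono) (use mult_strict_left_mono[OF small mpos] in auto)
    also have "\<dots> = m" using D by simp
    finally show False by simp
  qed
  then show ?thesis using linear_injective_0[OF conv_res_linear] by blast
qed

lemma dense_transfer:
  fixes F :: "('a::euclidean_space \<Rightarrow> real) set" and L :: "'a \<Rightarrow> 'a"
  assumes dF: "dense_ucc F" and lin: "linear L" and inj: "inj L"
  shows "dense_ucc ((\<lambda>m. m \<circ> L) ` F)"
  unfolding dense_ucc_def
proof (intro allI impI)
  fix f :: "'a \<Rightarrow> real" and K :: "'a set" and \<epsilon> :: real
  assume cf: "continuous_on UNIV f" and K: "compact K" and e: "0 < \<epsilon>"
  obtain L' where L': "linear L'" "\<And>x. L' (L x) = x" "\<And>x. L (L' x) = x"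
    using linear_injective_isomorphism[OF lin inj] by auto
  have cL': "continuous_on UNIV L'" using L'(1) by (simp add: linear_continuous_on linear_conv_bounded_linear)
  have cL: "continuous_on UNIV L" using lin by (simp add: linear_continuous_on linear_conv_bounded_linear)
  have cfL: "continuous_on UNIV (f \<circ> L')" by (rule continuous_on_compose[OF cL' continuous_on_subset[OF cf]]) auto
  have LK: "compact (L ` K)" by (rule compact_continuous_image[OF continuous_on_subset[OF cL] K]) auto
  obtain m where m: "m \<in> F" "\<forall>y\<in>L ` K. \<bar>(f \<circ> L') y - m y\<bar> < \<epsilon>"
    using dF cfL LK e unfolding dense_ucc_def by blast
  have "\<forall>x\<in>K. \<bar>f x - (m \<circ> L) x\<bar> < \<epsilon>" using m(2) L'(2) by auto
  then show "\<exists>h\<in>(\<lambda>m. m \<circ> L) ` F. \<forall>x\<in>K. \<bar>f x - h x\<bar> < \<epsilon>" using m(1) by blast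
qed

lemma fact_add_le: "fact (m + n) \<le> (fact m :: nat) * (m + n) ^ n"
proof (induction n)
  case 0 then show ?case by simp
next
  case (Suc n)
  have "fact (m + Suc n) = (m + Suc n) * (fact (m + n) :: nat)" by simp
  also have "\<dots> \<le> (m + Suc n) * (fact m * (m + n) ^ n)" using Suc by (intro mult_le_mono2)
  also have "\<dots> \<le> (m + Suc n) * (fact m * (m + Suc n) ^ n)" by (intro mult_le_mono2 mult_le_mono2 power_mono) auto
  also have "\<dots> = fact m * (m + Suc n) ^ Suc n" by (simp add: algebra_simps)
  finally show ?case .
qed

lemma moment_coef_le: "(fact (2 * m) :: real) / (2 ^ m * fact m) \<le> real m ^ m"
proof -
  have "(fact (2 * m) :: nat) \<le> fact m * (2 * m) ^ m" using fact_add_le[of m m] by (simp add: mult_2)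
  then have "(fact (2 * m) :: real) \<le> fact m * (2 * real m) ^ m"
    by (metis (mono_tags, lifting) of_nat_fact of_nat_le_iff of_nat_mult of_nat_numeral of_nat_power)
  also have "\<dots> = (2 ^ m * fact m) * real m ^ m" by (simp add: power_mult_distrib)
  finally show ?thesis by (simp add: divide_le_eq mult.commute)
qed

lemma num_bound:
  assumes "D \<ge> (1::nat)"
  shows "real D ^ 2 * (1 / 81) ^ D \<le> exp (- real D / 2)"
proof -
  have e2: "exp (1/2::real) \<le> 2"
  proof -
    have "exp (1/2::real) ^ 2 = exp 1" by (simp add: exp_of_nat_mult[symmetric] power2_eq_square exp_add[symmetric])
    also have "\<dots> \<le> 2 ^ 2" using exp_le by simp
    finally show ?thesis by (rule power2_le_imp_le) simp
  qed
  have "exp (real D / 2) = exp (1/2) ^ D" by (simp add: exp_of_nat_mult[symmetric])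
  also have "\<dots> \<le> 2 ^ D" by (rule power_mono[OF e2]) simp
  finally have ex: "exp (real D / 2) \<le> 2 ^ D" .
  have "real D \<le> 2 ^ D" using less_exp[of D] by (metis less_imp_le of_nat_le_iff of_nat_numeral of_nat_power)
  then have "real D ^ 2 \<le> (2 ^ D) ^ 2" by (intro power_mono) auto
  also have "\<dots> = (2::real) ^ (D * 2)" by (rule power_mult[symmetric])
  also have "\<dots> = (2::real) ^ (2 * D)" by (simp only: mult.commute)
  also have "\<dots> = (2 ^ 2) ^ D" by (rule power_mult)
  also have "\<dots> = 4 ^ D" by simp
  finally have d2: "real D ^ 2 \<le> 4 ^ D" .
  have "real D ^ 2 * exp (real D / 2) \<le> 4 ^ D * 2 ^ D" using d2 ex by (intro mult_mono) auto
  also have "\<dots> = 8 ^ D" by (simp add: power_mult_distrib[symmetric])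
  also have "\<dots> \<le> 81 ^ D" by (intro power_mono) auto
  finally have "real D ^ 2 * exp (real D / 2) \<le> 81 ^ D" .
  then have "real D ^ 2 \<le> 81 ^ D * exp (- real D / 2)"
    by (simp add: exp_minus field_simps)
  then show ?thesis by (simp add: field_simps power_one_over)
qed

lemma gauss_tail:
  fixes \<sigma> t :: real and m :: nat
  assumes s: "0 < \<sigma>" and t: "0 < t"
  shows "measure (density lborel (normal_density 0 \<sigma>)) (UNIV - {-t<..<t}) \<le> fact (2 * m) / ((2 / \<sigma>\<^sup>2) ^ m * fact m) / t ^ (2 * m)"
proof -
  let ?N = "density lborel (normal_density 0 \<sigma>)"
  interpret N: prob_space ?N by (rule prob_space_normal_density) (rule s)
  have hb: "has_bochner_integral lborel (\<lambda>x. normal_density 0 \<sigma> x * x ^ (2 * m)) (fact (2 * m) / ((2 / \<sigma>\<^sup>2) ^ m * fact m))"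
    using normal_moment_even[where \<mu>=0 and k=m and \<sigma>=\<sigma>, OF s] by simp
  have int: "integrable ?N (\<lambda>x. x ^ (2 * m))"
    using integrable_density[of "\<lambda>x. x ^ (2 * m)" lborel "normal_density 0 \<sigma>"] conjunct1[OF hb[unfolded has_bochner_integral_iff]] by simp
  have ival: "integral\<^sup>L ?N (\<lambda>x. x ^ (2 * m)) = fact (2 * m) / ((2 / \<sigma>\<^sup>2) ^ m * fact m)"
    using integral_density[of "\<lambda>x. x ^ (2 * m)" lborel "normal_density 0 \<sigma>"] conjunct2[OF hb[unfolded has_bochner_integral_iff]] by simp
  have tp: "0 < t ^ (2 * m)" using t by simp
  have mk: "measure ?N {x\<in>space ?N. x ^ (2 * m) \<ge> t ^ (2 * m)} \<le> integral\<^sup>L ?N (\<lambda>x. x ^ (2 * m)) / t ^ (2 * m)"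
    by (rule integral_Markov_inequality_measure[OF int _ _ tp, of UNIV]) (auto simp: zero_le_even_power)
  have sub: "UNIV - {-t<..<t} \<subseteq> {x\<in>space ?N. x ^ (2 * m) \<ge> t ^ (2 * m)}"
  proof
    fix x :: real assume "x \<in> UNIV - {-t<..<t}"
    then have "t \<le> \<bar>x\<bar>" by auto
    then have "t ^ (2 * m) \<le> \<bar>x\<bar> ^ (2 * m)" using t by (intro power_mono) auto
    also have "\<bar>x\<bar> ^ (2 * m) = x ^ (2 * m)" by (simp add: power_even_abs)
    finally show "x \<in> {x\<in>space ?N. x ^ (2 * m) \<ge> t ^ (2 * m)}" by simp
  qed
  have "measure ?N (UNIV - {-t<..<t}) \<le> measure ?N {x\<in>space ?N. x ^ (2 * m) \<ge> t ^ (2 * m)}"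
    by (rule N.finite_measure_mono[OF sub]) simp
  with mk ival show ?thesis by simp
qed

lemma gauss_box:
  fixes \<sigma> t :: real
  assumes s: "0 < \<sigma>"
  shows "Pi\<^sub>E (UNIV :: ('d::finite \<times> 'd) set) (\<lambda>_. {-t<..<t}) \<in> sets (gauss_matrix_measure \<sigma> :: (('d \<times> 'd) \<Rightarrow> real) measure)"
    and "measure (gauss_matrix_measure \<sigma> :: (('d \<times> 'd) \<Rightarrow> real) measure) (Pi\<^sub>E UNIV (\<lambda>_. {-t<..<t}))
         = measure (density lborel (normal_density 0 \<sigma>)) {-t<..<t} ^ CARD('d \<times> 'd)"
proof -
  let ?N = "density lborel (normal_density 0 \<sigma>)"
  interpret N: prob_space ?N by (rule prob_space_normal_density) (rule s)
  interpret P: product_prob_space "\<lambda>_::('d \<times> 'd). ?N" UNIV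
    by (intro product_prob_space.intro product_sigma_finite.intro product_prob_space_axioms.intro)
       (rule prob_space_imp_sigma_finite, rule N.prob_space_axioms, rule N.prob_space_axioms)
  show "Pi\<^sub>E (UNIV :: ('d \<times> 'd) set) (\<lambda>_. {-t<..<t}) \<in> sets (gauss_matrix_measure \<sigma> :: (('d \<times> 'd) \<Rightarrow> real) measure)"
    unfolding gauss_matrix_measure_def by (rule sets_PiM_I_finite) auto
  have "emeasure (gauss_matrix_measure \<sigma> :: (('d \<times> 'd) \<Rightarrow> real) measure) (Pi\<^sub>E UNIV (\<lambda>_. {-t<..<t}))
        = (\<Prod>i\<in>(UNIV :: ('d \<times> 'd) set). emeasure ?N {-t<..<t})"
    unfolding gauss_matrix_measure_def by (rule P.emeasure_PiM) auto
  also have "\<dots> = ennreal (measure ?N {-t<..<t} ^ CARD('d \<times> 'd))"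
    by (simp add: N.emeasure_eq_measure ennreal_power)
  finally show "measure (gauss_matrix_measure \<sigma> :: (('d \<times> 'd) \<Rightarrow> real) measure) (Pi\<^sub>E UNIV (\<lambda>_. {-t<..<t}))
         = measure (density lborel (normal_density 0 \<sigma>)) {-t<..<t} ^ CARD('d \<times> 'd)"
    unfolding measure_def by simp
qed

lemma sigma_bound:
  fixes \<sigma> :: real and D :: nat
  assumes D: "D \<ge> 1" and s0: "0 < \<sigma>" and s: "\<sigma> < 1 / (9 * real D powr (3/2))"
  shows "\<sigma>\<^sup>2 * (real D)\<^sup>2 \<le> 1 / (81 * real D)"
proof -
  have Dp: "real D > 0" using D by simp
  have "real D powr (3/2) = real D powr (1 + 1/2)" by (rule arg_cong[where f="\<lambda>a. real D powr a"]) simp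
  also have "\<dots> = real D * sqrt (real D)" unfolding powr_add using Dp by (simp add: powr_half_sqrt)
  finally have pw: "real D powr (3/2) = real D * sqrt (real D)" .
  have sq: "sqrt (real D) > 0" using Dp by simp
  have "\<sigma> * real D < (1 / (9 * (real D * sqrt (real D)))) * real D"
    using mult_strict_right_mono[OF s Dp] unfolding pw .
  also have "\<dots> = 1 / (9 * sqrt (real D))" using Dp sq by simp
  finally have a: "\<sigma> * real D < 1 / (9 * sqrt (real D))" .
  have "(\<sigma> * real D)\<^sup>2 \<le> (1 / (9 * sqrt (real D)))\<^sup>2"
    using a s0 Dp by (intro power_mono) auto
  also have "\<dots> = 1 / (81 * (sqrt (real D))\<^sup>2)" by (simp add: power2_eq_square)
  also have "\<dots> = 1 / (81 * real D)" using Dp by simp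
  finally show ?thesis by (simp add: power_mult_distrib)
qed

lemma tail_final:
  fixes \<sigma> :: real and D :: nat
  assumes D: "D \<ge> 1" and s0: "0 < \<sigma>" and s: "\<sigma>\<^sup>2 * (real D)\<^sup>2 \<le> 1 / (81 * real D)"
  shows "fact (2 * D) / ((2 / \<sigma>\<^sup>2) ^ D * fact D) / (1 / real D) ^ (2 * D) \<le> (1/81) ^ D"
proof -
  have Dp: "real D > 0" using D by simp
  define A where "A = (\<sigma>\<^sup>2) ^ D"
  define B where "B = ((real D)\<^sup>2) ^ D"
  define F where "F = (fact (2 * D) :: real)"
  define G where "G = (fact D :: real)"
  define T where "T = (2::real) ^ D"
  have pos: "A > 0" "B > 0" "G > 0" "T > 0" using s0 Dp by (auto simp: A_def B_def G_def T_def)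
  have e1: "(2 / \<sigma>\<^sup>2) ^ D = T / A" by (simp add: T_def A_def power_divide)
  have e2: "(1 / real D) ^ (2 * D) = 1 / B" by (simp add: B_def power_one_over power_mult)
  have e3: "(\<sigma>\<^sup>2 * (real D)\<^sup>2) ^ D = A * B" by (simp add: A_def B_def power_mult_distrib)
  have "fact (2 * D) / ((2 / \<sigma>\<^sup>2) ^ D * fact D) / (1 / real D) ^ (2 * D) = F / ((T / A) * G) / (1 / B)"
    unfolding e1 e2 F_def G_def ..
  also have "\<dots> = (F / (T * G)) * (A * B)" using pos by (simp add: field_simps)
  also have "\<dots> = (fact (2 * D) / (2 ^ D * fact D)) * (\<sigma>\<^sup>2 * (real D)\<^sup>2) ^ D"
    unfolding e3 F_def T_def G_def ..
  also have "\<dots> \<le> real D ^ D * (1 / (81 * real D)) ^ D"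
    by (intro mult_mono moment_coef_le power_mono s) auto
  also have "\<dots> = (real D * (1 / (81 * real D))) ^ D" by (rule power_mult_distrib[symmetric])
  also have "real D * (1 / (81 * real D)) = 1/81" using Dp by simp
  finally show ?thesis .
qed

lemma dense_mlp:
  fixes \<zeta> :: "real \<Rightarrow> real"
  assumes c: "continuous_on UNIV \<zeta>" and na: "\<not> (\<exists>a b. \<forall>x. \<zeta> x = a * x + b)"
  shows "dense_ucc (mlp \<zeta> :: ('a::euclidean_space \<Rightarrow> real) set)"
  unfolding dense_ucc_def
proof (intro allI impI)
  fix f :: "'a \<Rightarrow> real" and K :: "'a set" and \<epsilon> :: real
  assume "continuous_on UNIV f" "compact K" "0 < \<epsilon>"
  from dense_lay[OF c na this] obtain L h where "h \<in> lay \<zeta> (Suc L)" "\<forall>x\<in>K. \<bar>f x - h x\<bar> < \<epsilon>" by blast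
  then show "\<exists>h\<in>mlp \<zeta>. \<forall>x\<in>K. \<bar>f x - h x\<bar> < \<epsilon>" using lay_mlp by blast
qed

theorem theorem3:
  fixes \<zeta> :: "real \<Rightarrow> real" and \<sigma> :: real
  assumes cont: "continuous_on UNIV \<zeta>"
    and act: "(\<not> (\<exists>p :: real poly. \<forall>x. \<zeta> x = poly p x)) \<or>
              ((\<not> (\<exists>a b. \<forall>x. \<zeta> x = a * x + b)) \<and> (\<exists>t. cont_diff_at \<zeta> t \<and> deriv \<zeta> t \<noteq> 0))"
    and sig: "0 < \<sigma>" "\<sigma> < 1 / (9 * real CARD('d) powr (3/2))"
  shows "\<exists>S \<in> sets (gauss_matrix_measure \<sigma> :: (('d::finite \<times> 'd) \<Rightarrow> real) measure).
     S \<subseteq> {w. dense_ucc ((\<lambda>m. m \<circ> conv_res (norm_adj (complete_graph :: 'n::finite \<Rightarrow> 'n \<Rightarrow> bool)) (mat_of w))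
                              ` (mlp \<zeta> :: (real^'d^'n \<Rightarrow> real) set))}
     \<and> measure (gauss_matrix_measure \<sigma>) S \<ge> 1 - exp (- real CARD('d) / 2)"
proof -
  define D where "D = CARD('d)"
  have D1: "D \<ge> 1" unfolding D_def by (simp add: Suc_leI)
  have Dp: "real D > 0" using D1 by simp
  define t where "t = 1 / real D"
  have tp: "t > 0" using Dp by (simp add: t_def)
  define S where "S = Pi\<^sub>E (UNIV :: ('d \<times> 'd) set) (\<lambda>_. {-t<..<t})"
  have na: "\<not> (\<exists>a b. \<forall>x. \<zeta> x = a * x + b)"
  proof
    assume "\<exists>a b. \<forall>x. \<zeta> x = a * x + b"
    then obtain a b where ab: "\<forall>x. \<zeta> x = a * x + b" by blast
    then have "\<forall>x. \<zeta> x = poly [:b, a:] x" by (simp add: algebra_simps)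
    then show False using act ab by blast
  qed
  have Sset: "S \<in> sets (gauss_matrix_measure \<sigma> :: (('d \<times> 'd) \<Rightarrow> real) measure)"
    unfolding S_def by (rule gauss_box(1)[OF sig(1)])
  have dm: "dense_ucc (mlp \<zeta> :: (real^'d^'n \<Rightarrow> real) set)" by (rule dense_mlp[OF cont na])
  have sub: "S \<subseteq> {w. dense_ucc ((\<lambda>m. m \<circ> conv_res (norm_adj (complete_graph :: 'n::finite \<Rightarrow> 'n \<Rightarrow> bool)) (mat_of w))
                              ` (mlp \<zeta> :: (real^'d^'n \<Rightarrow> real) set))}"
  proof
    fix w assume w: "w \<in> S"
    have small: "\<bar>mat_of w $ i $ j\<bar> < 1 / real CARD('d)" for i j
    proof -
      have "w (i, j) \<in> {-t<..<t}" using w unfolding S_def by (auto simp: PiE_iff)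
      then show ?thesis by (auto simp: mat_of_def t_def D_def)
    qed
    show "w \<in> {w. dense_ucc ((\<lambda>m. m \<circ> conv_res (norm_adj (complete_graph :: 'n::finite \<Rightarrow> 'n \<Rightarrow> bool)) (mat_of w))
                              ` (mlp \<zeta> :: (real^'d^'n \<Rightarrow> real) set))}"
      using dense_transfer[OF dm conv_res_linear conv_res_inj[OF small]] by simp
  qed
  let ?N = "density lborel (normal_density 0 \<sigma>)"
  interpret N: prob_space ?N by (rule prob_space_normal_density) (rule sig(1))
  define q where "q = measure ?N (UNIV - {-t<..<t})"
  have pq: "measure ?N {-t<..<t} = 1 - q"
    unfolding q_def using N.prob_compl[of "{-t<..<t}"] by simp
  have q0: "0 \<le> q" "q \<le> 1" unfolding q_def by auto
  have "q \<le> fact (2 * D) / ((2 / \<sigma>\<^sup>2) ^ D * fact D) / t ^ (2 * D)"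
    unfolding q_def by (rule gauss_tail[OF sig(1) tp])
  also have "\<dots> \<le> (1/81) ^ D"
    unfolding t_def by (rule tail_final[OF D1 sig(1) sigma_bound[OF D1 sig(1)]]) (use sig(2) in \<open>simp add: D_def\<close>)
  finally have qb: "q \<le> (1/81) ^ D" .
  have mS: "measure (gauss_matrix_measure \<sigma> :: (('d \<times> 'd) \<Rightarrow> real) measure) S = (1 - q) ^ (D * D)"
    unfolding S_def using gauss_box(2)[OF sig(1), of t] pq by (simp add: D_def)
  have "1 - exp (- real D / 2) \<le> 1 - real D ^ 2 * (1/81) ^ D" using num_bound[OF D1] by simp
  also have "\<dots> \<le> 1 - real (D * D) * q" using qb by (simp add: power2_eq_square mult_left_mono)
  also have "\<dots> = 1 + real (D * D) * (- q)" by simp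
  also have "\<dots> \<le> (1 + (- q)) ^ (D * D)" by (rule Bernoulli_inequality) (use q0 in simp)
  also have "\<dots> = measure (gauss_matrix_measure \<sigma> :: (('d \<times> 'd) \<Rightarrow> real) measure) S" using mS by simp
  finally have "measure (gauss_matrix_measure \<sigma> :: (('d \<times> 'd) \<Rightarrow> real) measure) S \<ge> 1 - exp (- real CARD('d) / 2)"
    by (simp add: D_def)
  then show ?thesis using Sset sub by blast
qed

end
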